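(* Let $F$ satisfy the standing assumptions below, let $\lambda>0$, and run the general conversion scheme below with an online learner $\mathcal{A}$ which, for every $t\in[T]$ and every comparator $\mathbf{u}\in\mathbb{R}^d$ (deterministic or depending on the run), satisfies $$\mathbb{E}[\mathrm{Regret}^\beta_t(\mathbf{u})]\le\frac{2\|\mathbf{u}\|(G+\sigma)}{\beta\sqrt{1-\beta}}+\frac{\mu}{2}\|\mathbf{u}\|^2.$$ Let $\varepsilon>0$ with $\varepsilon\le\frac72(G+\sigma)$ and $T\ge49(G+\sigma)^2\varepsilon^{-2}$. Choose $\beta=\beta_\star=1-\left(\frac{\varepsilon}{7(G+\sigma)}\right)^2$, $D_\star=\frac14\lambda^{-1/2}\varepsilon^{1/2}\left(1+\frac{49(G+\sigma)^2}{\varepsilon^2}\sqrt{C_{\mathbf{x}}}\right)^{-1}$, and $\mu=\mu_\star=2\lambda^{1/2}\varepsilon^{1/2}\left(1+\frac{49(G+\sigma)^2}{\varepsilon^2}\sqrt{C_{\mathbf{x}}}\right)$. Then $$\mathbb{E}_\tau\|\nabla F(\overline{\mathbf{y}}_\tau)\|_\lambda\le3\varepsilon+\frac{1}{D_\star T}\,\mathbb{E}\sum_{t=1}^T\big(F(\mathbf{x}_t)-F(\mathbf{w}_t)\big).$$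
   Context: Norms are Euclidean. Standing assumptions: $F:\mathbb{R}^d\to\mathbb{R}$ is differentiable; for all $\mathbf{x},\mathbf{w}$, $F(\mathbf{x})-F(\mathbf{w})=\int_0^1\langle\nabla F(\mathbf{w}+t(\mathbf{x}-\mathbf{w})),\mathbf{x}-\mathbf{w}\rangle\,dt$; $\|\nabla F(\mathbf{x})\|\le G$ for all $\mathbf{x}$. A stochastic gradient oracle, called at $\mathbf{x}$, independently returns $\mathbf{g}$ with $\mathbb{E}[\mathbf{g}]=\nabla F(\mathbf{x})$ and $\mathbb{E}\|\mathbf{g}-\nabla F(\mathbf{x})\|^2\le\sigma^2$. For $\lambda>0$: $\|\nabla F(\mathbf{x})\|_\lambda := \inf\{\|\mathbb{E}_{\mathbf{w}\sim p}\nabla F(\mathbf{w})\| + \lambda\,\mathbb{E}_{\mathbf{w}\sim p}\|\mathbf{w}-\mathbf{x}\|^2\}$, the infimum over probability distributions $p$ on $\mathbb{R}^d$ with mean $\mathbf{x}$. General conversion scheme: input $\mathbf{x}_0=\mathbf{w}_0\in\mathbb{R}^d$, $T$, $\mu\ge0$, online learner $\mathcal{A}$ (outputting $\Delta_t\in\mathbb{R}^d$ at round $t$ based on $\ell_1,\dots,\ell_{t-1}$). For $t=1,\dots,T$: receive $\Delta_t$; choose $\mathbf{x}_t$ arbitrarily (may depend on everything so far including $\Delta_t$, not on $s_t,\mathbf{g}_t$ or later randomness); $\mathbf{w}_t=\mathbf{x}_t+\Delta_t$; $\mathbf{y}_t=\mathbf{x}_t+s_t\Delta_t$, $s_t\sim\mathrm{Unif}[0,1]$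 i.i.d.; $\mathbf{g}_t$ = oracle output at $\mathbf{y}_t$; send $\ell_t(\mathbf{v})=\langle\mathbf{g}_t,\mathbf{v}\rangle+\frac\mu2\|\mathbf{v}\|^2$ to $\mathcal{A}$. Discounted regret: $\mathrm{Regret}^\beta_t(\mathbf{u}) := \sum_{s=1}^t\beta^{t-s}(\ell_s(\Delta_s)-\ell_s(\mathbf{u}))$. EMA: $\overline{\mathbf{y}}_t := \frac{1-\beta}{1-\beta^t}\sum_{s=1}^t\beta^{t-s}\mathbf{y}_s$. Random index $\tau$, independent of the algorithm: $\Pr(\tau=t)=\frac{1-\beta^t}{T}$ for $t\le T-1$, $\Pr(\tau=T)=\frac{1-\beta^T}{(1-\beta)T}$; $\mathbb{E}_\tau$ is expectation over $\tau$ and all randomness of the algorithm. $C_{\mathbf{x}}$ is the smallest $C\ge0$ with $\mathbb{E}\sum_{t=1}^T\|\mathbf{x}_t-\mathbf{x}_{t-1}\|^2\le C\,\mathbb{E}\sum_{t=1}^T\|\Delta_t\|^2$. *)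

theory Defs
  imports "HOL-Probability.Probability"
begin

definition lam_norm :: "('a::euclidean_space \<Rightarrow> 'a) \<Rightarrow> real \<Rightarrow> 'a \<Rightarrow> real" where
  "lam_norm gF lam x = Inf {norm (\<integral>w. gF w \<partial>p) + lam * (\<integral>w. (norm (w - x))\<^sup>2 \<partial>p) | p.
      prob_space p \<and> sets p = sets borel \<and> integrable p (\<lambda>w. w) \<and> (\<integral>w. w \<partial>p) = x
      \<and> integrable p (\<lambda>w. (norm (w - x))\<^sup>2)}"

definition loss :: "real \<Rightarrow> 'a::euclidean_space \<Rightarrow> 'a \<Rightarrow> real" where
  "loss mu gs v = gs \<bullet> v + mu / 2 * (norm v)\<^sup>2"

definition disc_regret :: "real \<Rightarrow> real \<Rightarrow> (nat \<Rightarrow> 'a::euclidean_space) \<Rightarrow> (nat \<Rightarrow> 'a) \<Rightarrow> nat \<Rightarrow> 'a \<Rightarrow> real" where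
  "disc_regret beta mu g D t u = (\<Sum>s=1..t. beta ^ (t - s) * (loss mu (g s) (D s) - loss mu (g s) u))"

definition ema :: "real \<Rightarrow> (nat \<Rightarrow> 'a::euclidean_space) \<Rightarrow> nat \<Rightarrow> 'a" where
  "ema beta y t = ((1 - beta) / (1 - beta ^ t)) *\<^sub>R (\<Sum>s=1..t. beta ^ (t - s) *\<^sub>R y s)"

definition tau_prob :: "real \<Rightarrow> nat \<Rightarrow> nat \<Rightarrow> real" where
  "tau_prob beta T t = (if t = T then (1 - beta ^ T) / ((1 - beta) * real T)
                         else (1 - beta ^ t) / real T)"

definition Cx :: "'w measure \<Rightarrow> (nat \<Rightarrow> 'w \<Rightarrow> 'a::euclidean_space) \<Rightarrow> (nat \<Rightarrow> 'w \<Rightarrow> 'a) \<Rightarrow> nat \<Rightarrow> real" where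
  "Cx M x D T = Inf {C. C \<ge> 0 \<and>
      (\<integral>\<omega>. (\<Sum>t=1..T. (norm (x t \<omega> - x (t - 1) \<omega>))\<^sup>2) \<partial>M)
        \<le> C * (\<integral>\<omega>. (\<Sum>t=1..T. (norm (D t \<omega>))\<^sup>2) \<partial>M)}"

end

theory Submission
  imports Defs "HOL-Probability.Probability"
begin

lemma gF_meas:
  fixes F :: "'a::euclidean_space \<Rightarrow> real"
  assumes d: "\<And>z. (F has_derivative (\<lambda>h. gF z \<bullet> h)) (at z)"
  shows "gF \<in> borel_measurable borel"
proof -
  have contF: "continuous_on UNIV F"
    using d has_derivative_continuous continuous_at_imp_continuous_on by blast
  have Fm: "F \<in> borel_measurable borel"
    using contF borel_measurable_continuous_onI by blast
  show ?thesis
  proof (subst borel_measurable_euclidean_space, intro ballI)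
    fix b :: 'a assume b: "b \<in> Basis"
    let ?u = "\<lambda>n z. (F (z + inverse (real (Suc n)) *\<^sub>R b) - F z) / inverse (real (Suc n))"
    show "(\<lambda>z. gF z \<bullet> b) \<in> borel_measurable borel"
    proof (rule borel_measurable_LIMSEQ_real[where u="?u"])
      fix n
      have "continuous_on UNIV (?u n)"
        by (intro continuous_intros continuous_on_compose2[OF contF]) auto
      then show "?u n \<in> borel_measurable borel" using borel_measurable_continuous_onI by blast
    next
      fix z :: 'a
      have l: "((\<lambda>r. z + r *\<^sub>R b) has_derivative (\<lambda>r. r *\<^sub>R b)) (at 0)"
        by (auto intro!: derivative_eq_intros)
      have "((\<lambda>r. F (z + r *\<^sub>R b)) has_derivative (\<lambda>r. gF z \<bullet> (r *\<^sub>R b))) (at 0)"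
        proof -
          have d': "(F has_derivative (\<lambda>h. gF z \<bullet> h)) (at ((\<lambda>r. z + r *\<^sub>R b) 0))" using d[of z] by simp
          show ?thesis using has_derivative_compose[OF l d'] by simp
        qed
      then have "((\<lambda>r. F (z + r *\<^sub>R b)) has_real_derivative (gF z \<bullet> b)) (at 0)"
        by (simp add: has_field_derivative_def mult.commute[of _ "gF z \<bullet> b"])
      then have lim: "((\<lambda>h. (F (z + h *\<^sub>R b) - F z) / h) \<longlongrightarrow> gF z \<bullet> b) (at 0)"
        using DERIV_D by fastforce
      have sq: "filterlim (\<lambda>n. inverse (real (Suc n))) (at 0) sequentially"
        unfolding filterlim_at using LIMSEQ_inverse_real_of_nat by simp
      show "(\<lambda>n. ?u n z) \<longlonglongrightarrow> gF z \<bullet> b"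
        using filterlim_compose[OF lim sq] by (simp add: o_def)
    qed
  qed
qed

lemma indep_ftc:
  fixes F :: "'a::euclidean_space \<Rightarrow> real" and gF :: "'a \<Rightarrow> 'a"
    and X Dl :: "'w \<Rightarrow> 'a" and S :: "'w \<Rightarrow> real"
  assumes M: "prob_space M" and sub: "subalgebra M N"
    and Xm: "X \<in> borel_measurable N" and Dm: "Dl \<in> borel_measurable N"
    and Sm: "S \<in> borel_measurable M"
    and Su: "distr M lborel S = uniform_measure lborel {0..1}"
    and ind: "\<And>A B. A \<in> sets N \<Longrightarrow> B \<in> sets borel \<Longrightarrow>
        measure M (A \<inter> (S -` B \<inter> space M)) = measure M A * measure M (S -` B \<inter> space M)"
    and gFm: "gF \<in> borel_measurable borel" and Fm: "F \<in> borel_measurable borel"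
    and Gb: "\<And>z. norm (gF z) \<le> G"
    and ftc: "\<And>z w. ((\<lambda>r. gF (w + r *\<^sub>R (z - w)) \<bullet> (z - w)) has_integral (F z - F w)) {0..1}"
    and Dint: "integrable M (\<lambda>\<omega>. norm (Dl \<omega>))"
  shows "(\<integral>\<omega>. gF (X \<omega> + S \<omega> *\<^sub>R Dl \<omega>) \<bullet> Dl \<omega> \<partial>M) = (\<integral>\<omega>. F (X \<omega> + Dl \<omega>) - F (X \<omega>) \<partial>M)"
proof -
  interpret prob_space M by fact
  note [measurable] = gFm Fm
  have XM[measurable]: "X \<in> borel_measurable M" using measurable_from_subalg[OF sub Xm] .
  have DM[measurable]: "Dl \<in> borel_measurable M" using measurable_from_subalg[OF sub Dm] .
  note [measurable] = Sm
  define V where "V = (\<lambda>\<omega>. (X \<omega>, Dl \<omega>))"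
  have VN: "V \<in> measurable N (borel \<Otimes>\<^sub>M borel)" unfolding V_def using Xm Dm by measurable
  have VM[measurable]: "V \<in> measurable M (borel \<Otimes>\<^sub>M borel)" unfolding V_def by measurable
  have spN: "space N = space M" using sub by (simp add: subalgebra_def)
  let ?P = "distr M (borel \<Otimes>\<^sub>M borel) V"
  let ?U = "uniform_measure lborel {0..1::real}"
  interpret P: prob_space ?P by (rule prob_space_distr) simp
  interpret U: prob_space ?U by (rule prob_space_uniform_measure) auto
  interpret PU: pair_prob_space ?P ?U ..
  have deq: "?P \<Otimes>\<^sub>M ?U = distr M ((borel \<Otimes>\<^sub>M borel) \<Otimes>\<^sub>M lborel) (\<lambda>\<omega>. (V \<omega>, S \<omega>))"
  proof (rule pair_measure_eqI)
    show "sigma_finite_measure ?P" ..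
    show "sigma_finite_measure ?U" ..
    fix A B assume A: "A \<in> sets ?P" and B: "B \<in> sets ?U"
    have A': "A \<in> sets (borel \<Otimes>\<^sub>M borel)" using A by simp
    have B': "B \<in> sets borel" using B by simp
    have aN: "V -` A \<inter> space M \<in> sets N" using A' VN spN by (metis measurable_sets)
    have "emeasure (distr M ((borel \<Otimes>\<^sub>M borel) \<Otimes>\<^sub>M lborel) (\<lambda>\<omega>. (V \<omega>, S \<omega>))) (A \<times> B)
        = emeasure M ((\<lambda>\<omega>. (V \<omega>, S \<omega>)) -` (A \<times> B) \<inter> space M)"
      using A' B' by (intro emeasure_distr) auto
    also have "(\<lambda>\<omega>. (V \<omega>, S \<omega>)) -` (A \<times> B) \<inter> space M = (V -` A \<inter> space M) \<inter> (S -` B \<inter> space M)" by auto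
    also have "emeasure M \<dots> = emeasure M (V -` A \<inter> space M) * emeasure M (S -` B \<inter> space M)"
      using ind[OF aN B'] A' B' by (simp add: emeasure_eq_measure measure_nonneg ennreal_mult)
    also have "\<dots> = emeasure ?P A * emeasure (distr M lborel S) B"
      using A' B' by (simp add: emeasure_distr)
    finally show "emeasure ?P A * emeasure ?U B = emeasure (distr M ((borel \<Otimes>\<^sub>M borel) \<Otimes>\<^sub>M lborel) (\<lambda>\<omega>. (V \<omega>, S \<omega>))) (A \<times> B)"
      using Su by simp
  qed simp
  define f where "f = (\<lambda>p :: ('a \<times> 'a) \<times> real. gF (fst (fst p) + snd p *\<^sub>R snd (fst p)) \<bullet> snd (fst p))"
  have fm[measurable]: "f \<in> borel_measurable ((borel \<Otimes>\<^sub>M borel) \<Otimes>\<^sub>M lborel)"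
    unfolding f_def by measurable
  have fint: "integrable M (\<lambda>\<omega>. f (V \<omega>, S \<omega>))"
  proof (rule Bochner_Integration.integrable_bound[where f="\<lambda>\<omega>. G * norm (Dl \<omega>)"])
    show "integrable M (\<lambda>\<omega>. G * norm (Dl \<omega>))" using Dint by simp
    show "(\<lambda>\<omega>. f (V \<omega>, S \<omega>)) \<in> borel_measurable M" by measurable
    show "AE \<omega> in M. norm (f (V \<omega>, S \<omega>)) \<le> norm (G * norm (Dl \<omega>))"
    proof (rule AE_I2)
      fix \<omega>
      have "norm (f (V \<omega>, S \<omega>)) \<le> norm (gF (X \<omega> + S \<omega> *\<^sub>R Dl \<omega>)) * norm (Dl \<omega>)"
        unfolding f_def V_def by (simp add: Cauchy_Schwarz_ineq2)
      also have "\<dots> \<le> G * norm (Dl \<omega>)" by (rule mult_right_mono[OF Gb]) simp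
      also have "\<dots> \<le> norm (G * norm (Dl \<omega>))" by simp
      finally show "norm (f (V \<omega>, S \<omega>)) \<le> norm (G * norm (Dl \<omega>))" .
    qed
  qed
  have pint: "integrable (?P \<Otimes>\<^sub>M ?U) f"
    unfolding deq by (subst integrable_distr_eq) (auto intro: fint)
  have "(\<integral>\<omega>. gF (X \<omega> + S \<omega> *\<^sub>R Dl \<omega>) \<bullet> Dl \<omega> \<partial>M) = (\<integral>\<omega>. f (V \<omega>, S \<omega>) \<partial>M)"
    unfolding f_def V_def by simp
  also have "\<dots> = integral\<^sup>L (?P \<Otimes>\<^sub>M ?U) f"
    unfolding deq by (subst integral_distr) auto
  also have "\<dots> = (\<integral>v. (\<integral>r. f (v, r) \<partial>?U) \<partial>?P)"
    using PU.integral_fst'[OF pint] by simp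
  also have "\<dots> = (\<integral>v. F (fst v + snd v) - F (fst v) \<partial>?P)"
  proof (rule Bochner_Integration.integral_cong[OF refl])
    fix v :: "'a \<times> 'a"
    obtain x d where v: "v = (x, d)" by (cases v)
    let ?h = "\<lambda>r. gF (x + r *\<^sub>R d) \<bullet> d"
    have hm[measurable]: "?h \<in> borel_measurable borel" by measurable
    have "(\<integral>r. f (v, r) \<partial>?U) = (\<integral>r. indicator {0..1} r *\<^sub>R ?h r \<partial>lborel)"
    proof -
      have u: "?U = density lborel (\<lambda>r. ennreal (indicator {0..1::real} r))"
        unfolding uniform_measure_def by (simp add: ennreal_indicator divide_ennreal_def)
      show ?thesis unfolding u v f_def
        by (subst integral_density) auto
    qed
    also have "\<dots> = (LINT r:{0..1}|lborel. ?h r)"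
      by (simp add: set_lebesgue_integral_def)
    also have "\<dots> = integral {0..1} ?h"
    proof (rule set_borel_integral_eq_integral(2))
      show "set_integrable lborel {0..1} ?h"
        unfolding set_integrable_def
      proof (rule Bochner_Integration.integrable_bound[where f="\<lambda>r. indicator {0..1::real} r * (G * norm d)"])
        show "integrable lborel (\<lambda>r. indicator {0..1::real} r * (G * norm d))"
          by (intro integrable_mult_left) auto
        show "(\<lambda>r. indicator {0..1} r *\<^sub>R ?h r) \<in> borel_measurable lborel" by measurable
        show "AE r in lborel. norm (indicator {0..1} r *\<^sub>R ?h r) \<le> norm (indicator {0..1::real} r * (G * norm d))"
        proof (rule AE_I2)
          fix r :: real
          have "\<bar>?h r\<bar> \<le> norm (gF (x + r *\<^sub>R d)) * norm d" by (rule Cauchy_Schwarz_ineq2)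
          also have "\<dots> \<le> G * norm d" by (rule mult_right_mono[OF Gb]) simp
          finally have "\<bar>?h r\<bar> \<le> G * norm d" .
          then show "norm (indicator {0..1} r *\<^sub>R ?h r) \<le> norm (indicator {0..1::real} r * (G * norm d))"
            by (auto simp: indicator_def)
        qed
      qed
    qed
    also have "\<dots> = F (x + d) - F x"
      using ftc[where z="x + d" and w=x] unfolding add_diff_cancel_left' by (rule integral_unique)
    finally show "(\<integral>r. f (v, r) \<partial>?U) = F (fst v + snd v) - F (fst v)" using v by simp
  qed
  also have "\<dots> = (\<integral>\<omega>. F (X \<omega> + Dl \<omega>) - F (X \<omega>) \<partial>M)"
    by (subst integral_distr) (auto simp: V_def)
  finally show ?thesis .
qed

lemma swap2:
  fixes f :: "nat \<Rightarrow> nat \<Rightarrow> 'b::comm_monoid_add"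
  shows "(\<Sum>t=1..n. \<Sum>s=1..t. f t s) = (\<Sum>s=1..n. \<Sum>t=s..n. f t s)"
proof (induction n)
  case 0 then show ?case by simp
next
  case (Suc n)
  have "(\<Sum>s=1..Suc n. \<Sum>t=s..Suc n. f t s) = (\<Sum>s=1..n. \<Sum>t=s..Suc n. f t s) + f (Suc n) (Suc n)"
    by simp
  also have "(\<Sum>s=1..n. \<Sum>t=s..Suc n. f t s) = (\<Sum>s=1..n. (\<Sum>t=s..n. f t s) + f (Suc n) s)"
    by (rule sum.cong) auto
  also have "\<dots> = (\<Sum>s=1..n. \<Sum>t=s..n. f t s) + (\<Sum>s=1..n. f (Suc n) s)"
    by (simp add: sum.distrib)
  finally show ?case using Suc by (simp add: add.assoc)
qed

lemma swap2':
  fixes g :: "nat \<Rightarrow> nat \<Rightarrow> 'b::comm_monoid_add"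
  shows "(\<Sum>s=1..n. \<Sum>r=Suc s..n. g s r) = (\<Sum>r=1..n. \<Sum>s=1..r-1. g s r)"
proof (induction n)
  case 0 then show ?case by simp
next
  case (Suc n)
  have "(\<Sum>s=1..Suc n. \<Sum>r=Suc s..Suc n. g s r) = (\<Sum>s=1..n. \<Sum>r=Suc s..Suc n. g s r)"
    by simp
  also have "\<dots> = (\<Sum>s=1..n. (\<Sum>r=Suc s..n. g s r) + g s (Suc n))"
    by (rule sum.cong) auto
  also have "\<dots> = (\<Sum>s=1..n. \<Sum>r=Suc s..n. g s r) + (\<Sum>s=1..n. g s (Suc n))"
    by (simp add: sum.distrib)
  finally show ?case using Suc by simp
qed

lemma geom_id:
  fixes b :: real
  shows "(1 - b) * (\<Sum>k<n. b ^ k) + b ^ n = 1"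
proof (induction n)
  case 0 then show ?case by simp
next
  case (Suc n)
  have "(1 - b) * (\<Sum>k<Suc n. b ^ k) + b ^ Suc n = (1 - b) * (\<Sum>k<n. b ^ k) + b ^ n"
    by (simp add: algebra_simps)
  then show ?case using Suc by simp
qed

lemma geom_le:
  fixes b :: real assumes "0 \<le> b" "b < 1"
  shows "(\<Sum>k<n. b ^ k) \<le> 1 / (1 - b)"
proof -
  have "(1 - b) * (\<Sum>k<n. b ^ k) \<le> 1" proof -
    have "b ^ n \<ge> 0" using assms by simp
    then show ?thesis using geom_id[of b n] by linarith
  qed
  then show ?thesis using assms by (simp add: field_simps)
qed

lemma jgeom_id:
  fixes b :: real
  shows "(1 - b)^2 * (\<Sum>k<n. real k * b ^ k) = b - b ^ n * (real n - (real n - 1) * b)"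
proof (induction n)
  case 0 then show ?case by simp
next
  case (Suc n)
  have "(1 - b)^2 * (\<Sum>k<Suc n. real k * b ^ k) = (1 - b)^2 * (\<Sum>k<n. real k * b ^ k) + (1 - b)^2 * (real n * b ^ n)"
    by (simp add: algebra_simps)
  also have "\<dots> = b - b ^ n * (real n - (real n - 1) * b) + (1 - b)^2 * (real n * b ^ n)" using Suc by simp
  also have "\<dots> = b - b ^ Suc n * (real (Suc n) - (real (Suc n) - 1) * b)"
    by (simp add: algebra_simps power2_eq_square)
  finally show ?case .
qed

lemma jgeom_le:
  fixes b :: real assumes "0 \<le> b" "b < 1"
  shows "(\<Sum>k<n. real k * b ^ k) \<le> 1 / (1 - b)^2"
proof -
  have "b ^ n * (real n - (real n - 1) * b) \<ge> 0"
  proof -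
    have "(real n - 1) * b \<le> real n"
    proof (cases "n = 0")
      case True then show ?thesis using assms by simp
    next
      case False then have "real n - 1 \<ge> 0" by simp
      then have "(real n - 1) * b \<le> (real n - 1) * 1" using assms by (intro mult_left_mono) auto
      then show ?thesis by simp
    qed
    then show ?thesis using assms by simp
  qed
  then have "(1 - b)^2 * (\<Sum>k<n. real k * b ^ k) \<le> 1" using jgeom_id[of b n] assms by simp
  then show ?thesis using assms by (simp add: field_simps)
qed

definition ctf :: "real \<Rightarrow> nat \<Rightarrow> nat \<Rightarrow> real" where
  "ctf b T t = (if t = T then 1 else 1 - b)"

lemma ctf_nonneg: "b \<le> 1 \<Longrightarrow> ctf b T t \<ge> 0" by (simp add: ctf_def)

lemma split_top:
  fixes f :: "nat \<Rightarrow> real"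
  assumes "r \<le> T"
  shows "(\<Sum>t=r..T. f t) = (\<Sum>k<T-r. f (r + k)) + f T"
proof -
  have "{r..T} = {r..<T} \<union> {T}" using assms by auto
  then have "(\<Sum>t=r..T. f t) = (\<Sum>t=r..<T. f t) + f T" by simp
  also have "(\<Sum>t=r..<T. f t) = (\<Sum>k<T-r. f (r + k))"
  proof -
    have "(\<Sum>t=r..<T. f t) = (\<Sum>t=0+r..<(T-r)+r. f t)" using assms by simp
    also have "\<dots> = (\<Sum>k=0..<T-r. f (k + r))" by (rule sum.shift_bounds_nat_ivl)
    finally show ?thesis by (simp add: lessThan_atLeast0 add.commute)
  qed
  finally show ?thesis .
qed

lemma ctf_geom:
  fixes b :: real
  assumes "r \<le> T"
  shows "(\<Sum>t=r..T. ctf b T t * b ^ (t - r)) = 1"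
proof -
  have "(\<Sum>t=r..T. ctf b T t * b ^ (t - r)) = (\<Sum>k<T-r. ctf b T (r+k) * b ^ (r + k - r)) + ctf b T T * b ^ (T - r)"
    by (rule split_top[OF assms])
  also have "(\<Sum>k<T-r. ctf b T (r+k) * b ^ (r + k - r)) = (1 - b) * (\<Sum>k<T-r. b ^ k)"
    unfolding sum_distrib_left by (rule sum.cong) (auto simp: ctf_def)
  finally show ?thesis using geom_id[of b "T - r"] by (simp add: ctf_def)
qed

lemma npow_le:
  fixes b :: real assumes "0 \<le> b" "b < 1"
  shows "real n * b ^ n \<le> 1 / (1 - b)"
proof -
  have "real (card {..<n}) * b ^ n \<le> (\<Sum>k<n. b ^ k)"
    by (rule sum_bounded_below) (use assms in \<open>auto intro: power_decreasing\<close>)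
  then show ?thesis using geom_le[OF assms, of n] by simp
qed

lemma ctf_jgeom:
  fixes b :: real
  assumes "r \<le> T" "0 \<le> b" "b < 1"
  shows "(\<Sum>t=r..T. ctf b T t * (real (t - r) * b ^ (t - r))) \<le> 2 / (1 - b)"
proof -
  have "(\<Sum>t=r..T. ctf b T t * (real (t - r) * b ^ (t - r))) = (\<Sum>k<T-r. ctf b T (r+k) * (real (r + k - r) * b ^ (r + k - r))) + ctf b T T * (real (T - r) * b ^ (T - r))"
    by (rule split_top[OF assms(1)])
  also have "(\<Sum>k<T-r. ctf b T (r+k) * (real (r + k - r) * b ^ (r + k - r))) = (1 - b) * (\<Sum>k<T-r. real k * b ^ k)"
    unfolding sum_distrib_left by (rule sum.cong) (auto simp: ctf_def)
  also have "\<dots> \<le> (1 - b) * (1 / (1 - b)^2)"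
    using jgeom_le[OF assms(2,3)] assms by (intro mult_left_mono) auto
  also have "\<dots> = 1 / (1 - b)" using assms by (simp add: power2_eq_square)
  also have "ctf b T T * (real (T - r) * b ^ (T - r)) \<le> 1 / (1 - b)"
    using npow_le[OF assms(2,3)] by (simp add: ctf_def)
  finally show ?thesis by simp
qed

lemma rev_sum:
  fixes f :: "nat \<Rightarrow> real"
  shows "(\<Sum>s=1..r-1. f (r - s)) = (\<Sum>k=1..r-1. f k)"
  by (rule sum.reindex_bij_witness[of _ "\<lambda>k. r - k" "\<lambda>s. r - s"]) auto

lemma back_geom:
  fixes b :: real assumes "0 \<le> b" "b < 1"
  shows "(\<Sum>s=1..r-1. b ^ (r - s)) \<le> 1 / (1 - b)"
proof -
  have "(\<Sum>s=1..r-1. b ^ (r - s)) = (\<Sum>k=1..r-1. b ^ k)" by (rule rev_sum)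
  also have "\<dots> \<le> (\<Sum>k<r. b ^ k)" by (rule sum_mono2) (use assms in auto)
  also have "\<dots> \<le> 1 / (1 - b)" by (rule geom_le[OF assms])
  finally show ?thesis .
qed

lemma back_jgeom:
  fixes b :: real assumes "0 \<le> b" "b < 1"
  shows "(\<Sum>s=1..r-1. real (r - s) * b ^ (r - s)) \<le> 1 / (1 - b)^2"
proof -
  have "(\<Sum>s=1..r-1. real (r - s) * b ^ (r - s)) = (\<Sum>k=1..r-1. real k * b ^ k)" by (rule rev_sum)
  also have "\<dots> \<le> (\<Sum>k<r. real k * b ^ k)" by (rule sum_mono2) (use assms in auto)
  also have "\<dots> \<le> 1 / (1 - b)^2" by (rule jgeom_le[OF assms])
  finally show ?thesis .
qed

lemma phi_bound:
  fixes b :: real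
  assumes "1 \<le> r" "r \<le> T" "0 \<le> b" "b < 1"
  shows "(\<Sum>t=r..T. ctf b T t * (\<Sum>s=1..r-1. b ^ (t - s) * real (t - s))) \<le> 3 / (1 - b)^2"
proof -
  define A where "A = (\<Sum>s=1..r-1. b ^ (r - s))"
  define B where "B = (\<Sum>s=1..r-1. real (r - s) * b ^ (r - s))"
  have A0: "A \<ge> 0" unfolding A_def using assms by (intro sum_nonneg) auto
  have eq: "(\<Sum>s=1..r-1. b ^ (t - s) * real (t - s)) = (real (t - r) * b ^ (t - r)) * A + b ^ (t - r) * B"
    if "r \<le> t" for t
  proof -
    have "(\<Sum>s=1..r-1. b ^ (t - s) * real (t - s)) = (\<Sum>s=1..r-1. (real (t - r) * b ^ (t - r)) * b ^ (r - s) + b ^ (t - r) * (real (r - s) * b ^ (r - s)))"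
    proof (rule sum.cong[OF refl])
      fix s assume s: "s \<in> {1..r-1}"
      have "t - s = (t - r) + (r - s)" using s that by auto
      then have "b ^ (t - s) = b ^ (t - r) * b ^ (r - s)" by (simp add: power_add)
      moreover have "real (t - s) = real (t - r) + real (r - s)" using s that by auto
      ultimately show "b ^ (t - s) * real (t - s) = (real (t - r) * b ^ (t - r)) * b ^ (r - s) + b ^ (t - r) * (real (r - s) * b ^ (r - s))"
        by (simp add: algebra_simps)
    qed
    also have "\<dots> = (real (t - r) * b ^ (t - r)) * A + b ^ (t - r) * B"
      unfolding A_def B_def by (simp add: sum.distrib sum_distrib_left)
    finally show ?thesis .
  qed
  have "(\<Sum>t=r..T. ctf b T t * (\<Sum>s=1..r-1. b ^ (t - s) * real (t - s)))
      = (\<Sum>t=r..T. ctf b T t * ((real (t - r) * b ^ (t - r)) * A + b ^ (t - r) * B))"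
    by (rule sum.cong[OF refl], subst eq) auto
  also have "\<dots> = (\<Sum>t=r..T. ctf b T t * (real (t - r) * b ^ (t - r))) * A + (\<Sum>t=r..T. ctf b T t * b ^ (t - r)) * B"
    by (simp add: distrib_left sum.distrib sum_distrib_right mult.assoc)
  also have "\<dots> \<le> (2 / (1 - b)) * (1 / (1 - b)) + 1 * (1 / (1 - b)^2)"
  proof (rule add_mono)
    show "(\<Sum>t=r..T. ctf b T t * (real (t - r) * b ^ (t - r))) * A \<le> (2 / (1 - b)) * (1 / (1 - b))"
      using ctf_jgeom[OF assms(2-4)] back_geom[OF assms(3,4), of r] A0 unfolding A_def
      by (intro mult_mono) (use assms in \<open>auto simp: A_def\<close>)
    show "(\<Sum>t=r..T. ctf b T t * b ^ (t - r)) * B \<le> 1 * (1 / (1 - b)^2)"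
      using ctf_geom[OF assms(2), of b] back_jgeom[OF assms(3,4), of r] unfolding B_def by simp
  qed
  also have "\<dots> = 3 / (1 - b)^2" by (simp add: power2_eq_square field_simps)
  finally show ?thesis .
qed

lemma norm_sum_sq:
  fixes v :: "'i \<Rightarrow> 'a::real_normed_vector"
  shows "(norm (\<Sum>i\<in>I. v i))\<^sup>2 \<le> real (card I) * (\<Sum>i\<in>I. (norm (v i))\<^sup>2)"
proof -
  have "norm (\<Sum>i\<in>I. v i) \<le> (\<Sum>i\<in>I. norm (v i))" by (rule norm_sum)
  then have "(norm (\<Sum>i\<in>I. v i))\<^sup>2 \<le> (\<Sum>i\<in>I. norm (v i))\<^sup>2"
    by (intro power_mono) auto
  also have "\<dots> \<le> (\<Sum>i\<in>I. (norm (v i))\<^sup>2) * card I" by (rule sum_squared_le_sum_of_squares)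
  finally show ?thesis by (simp add: mult.commute)
qed

lemma telescope:
  fixes x :: "nat \<Rightarrow> 'a::ab_group_add"
  assumes "s \<le> t"
  shows "x t - x s = (\<Sum>r=Suc s..t. x r - x (r - 1))"
  using assms
proof (induction t)
  case 0 then show ?case by simp
next
  case (Suc t)
  show ?case
  proof (cases "s = Suc t")
    case True then show ?thesis by simp
  next
    case False
    then have "s \<le> t" using Suc by simp
    have "{Suc s..Suc t} = insert (Suc t) {Suc s..t}" using \<open>s \<le> t\<close> by auto
    then have "(\<Sum>r=Suc s..Suc t. x r - x (r - 1)) = (x (Suc t) - x t) + (\<Sum>r=Suc s..t. x r - x (r - 1))"
      by simp
    also have "\<dots> = (x (Suc t) - x t) + (x t - x s)" using Suc \<open>s \<le> t\<close> by simp
    finally show ?thesis by simp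
  qed
qed

lemma dist_sq_bound:
  fixes x :: "nat \<Rightarrow> 'a::real_normed_vector"
  assumes "s \<le> t"
  shows "(norm (x s - x t))\<^sup>2 \<le> real (t - s) * (\<Sum>r=Suc s..t. (norm (x r - x (r - 1)))\<^sup>2)"
proof -
  have "norm (x s - x t) = norm (x t - x s)" by (rule norm_minus_commute)
  also have "x t - x s = (\<Sum>r=Suc s..t. x r - x (r - 1))" by (rule telescope[OF assms])
  finally have "(norm (x s - x t))\<^sup>2 = (norm (\<Sum>r=Suc s..t. x r - x (r - 1)))\<^sup>2" by simp
  also have "\<dots> \<le> real (card {Suc s..t}) * (\<Sum>r=Suc s..t. (norm (x r - x (r - 1)))\<^sup>2)"
    by (rule norm_sum_sq)
  finally show ?thesis by simp
qed

lemma comb: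
  fixes x :: "nat \<Rightarrow> 'a::real_normed_vector" and b :: real
  assumes b: "0 \<le> b" "b < 1"
  shows "(\<Sum>t=1..T. ctf b T t * (\<Sum>s=1..t. b ^ (t - s) * (norm (x s - x t))\<^sup>2))
    \<le> 3 / (1 - b)^2 * (\<Sum>r=1..T. (norm (x r - x (r - 1)))\<^sup>2)"
proof -
  define d where "d r = (norm (x r - x (r - 1)))\<^sup>2" for r
  have d0: "d r \<ge> 0" for r unfolding d_def by simp
  have "(\<Sum>t=1..T. ctf b T t * (\<Sum>s=1..t. b ^ (t - s) * (norm (x s - x t))\<^sup>2))
     \<le> (\<Sum>t=1..T. ctf b T t * (\<Sum>s=1..t. \<Sum>r=Suc s..t. b ^ (t - s) * real (t - s) * d r))"
  proof (rule sum_mono)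
    fix t assume t: "t \<in> {1..T}"
    show "ctf b T t * (\<Sum>s=1..t. b ^ (t - s) * (norm (x s - x t))\<^sup>2)
       \<le> ctf b T t * (\<Sum>s=1..t. \<Sum>r=Suc s..t. b ^ (t - s) * real (t - s) * d r)"
    proof (rule mult_left_mono[OF sum_mono])
      fix s assume s: "s \<in> {1..t}"
      have "b ^ (t - s) * (norm (x s - x t))\<^sup>2 \<le> b ^ (t - s) * (real (t - s) * (\<Sum>r=Suc s..t. d r))"
        using dist_sq_bound[of s t x] s b unfolding d_def by (intro mult_left_mono) auto
      also have "\<dots> = (\<Sum>r=Suc s..t. b ^ (t - s) * real (t - s) * d r)"
        by (simp add: sum_distrib_left mult.assoc)
      finally show "b ^ (t - s) * (norm (x s - x t))\<^sup>2 \<le> (\<Sum>r=Suc s..t. b ^ (t - s) * real (t - s) * d r)" .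
    qed (use b in \<open>simp add: ctf_nonneg\<close>)
  qed
  also have "\<dots> = (\<Sum>t=1..T. ctf b T t * (\<Sum>r=1..t. \<Sum>s=1..r-1. b ^ (t - s) * real (t - s) * d r))"
    by (subst swap2') simp
  also have "\<dots> = (\<Sum>t=1..T. \<Sum>r=1..t. d r * (ctf b T t * (\<Sum>s=1..r-1. b ^ (t - s) * real (t - s))))"
    by (simp add: sum_distrib_left sum_distrib_right mult_ac)
  also have "\<dots> = (\<Sum>r=1..T. \<Sum>t=r..T. d r * (ctf b T t * (\<Sum>s=1..r-1. b ^ (t - s) * real (t - s))))"
    by (rule swap2)
  also have "\<dots> = (\<Sum>r=1..T. d r * (\<Sum>t=r..T. ctf b T t * (\<Sum>s=1..r-1. b ^ (t - s) * real (t - s))))"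
    by (simp add: sum_distrib_left)
  also have "\<dots> \<le> (\<Sum>r=1..T. d r * (3 / (1 - b)^2))"
    by (rule sum_mono, rule mult_left_mono[OF phi_bound]) (use b d0 in auto)
  also have "\<dots> = (\<Sum>r=1..T. d r) * (3 / (1 - b)^2)"
    by (rule sum_distrib_right[symmetric])
  finally show ?thesis unfolding d_def by (simp only: mult.commute)
qed

lemma swap_id:
  fixes a :: "nat \<Rightarrow> real"
  shows "(\<Sum>t=1..T. ctf b T t * (\<Sum>s=1..t. b ^ (t - s) * a s)) = (\<Sum>s=1..T. a s)"
proof -
  have "(\<Sum>t=1..T. ctf b T t * (\<Sum>s=1..t. b ^ (t - s) * a s)) = (\<Sum>t=1..T. \<Sum>s=1..t. ctf b T t * b ^ (t - s) * a s)"
    by (simp add: sum_distrib_left mult.assoc)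
  also have "\<dots> = (\<Sum>s=1..T. \<Sum>t=s..T. ctf b T t * b ^ (t - s) * a s)" by (rule swap2)
  also have "\<dots> = (\<Sum>s=1..T. (\<Sum>t=s..T. ctf b T t * b ^ (t - s)) * a s)"
    by (simp add: sum_distrib_right)
  also have "\<dots> = (\<Sum>s=1..T. a s)"
    by (rule sum.cong) (auto simp: ctf_geom)
  finally show ?thesis .
qed

lemma geom_back:
  fixes b :: real
  shows "(1 - b) * (\<Sum>s=1..t. b ^ (t - s)) = 1 - b ^ t"
proof -
  have "(\<Sum>s=1..t. b ^ (t - s)) = (\<Sum>k<t. b ^ k)"
    by (rule sum.reindex_bij_witness[of _ "\<lambda>k. t - k" "\<lambda>s. t - s"]) auto
  then show ?thesis using geom_id[of b t] by simp
qed

lemma norm_add_sq: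
  fixes a b :: "'a::real_inner"
  shows "(norm (a + b))\<^sup>2 = (norm a)\<^sup>2 + 2 * inner a b + (norm b)\<^sup>2"
  by (simp add: power2_norm_eq_inner inner_add_left inner_add_right inner_commute)

lemma variance_le:
  fixes y :: "'i \<Rightarrow> 'a::real_inner"
  assumes "finite I" "(\<Sum>i\<in>I. w i) = 1" "m = (\<Sum>i\<in>I. w i *\<^sub>R y i)"
  shows "(\<Sum>i\<in>I. w i * (norm (y i - m))\<^sup>2) \<le> (\<Sum>i\<in>I. w i * (norm (y i - z))\<^sup>2)"
proof -
  have e: "(norm (y i - z))\<^sup>2 = (norm (y i - m))\<^sup>2 + 2 * inner (y i - m) (m - z) + (norm (m - z))\<^sup>2" for i
  proof -
    have "y i - z = (y i - m) + (m - z)" by simp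
    then show ?thesis using norm_add_sq[of "y i - m" "m - z"] by simp
  qed
  have c: "(\<Sum>i\<in>I. w i * inner (y i - m) (m - z)) = 0"
  proof -
    have "(\<Sum>i\<in>I. w i * inner (y i - m) (m - z)) = inner (\<Sum>i\<in>I. w i *\<^sub>R (y i - m)) (m - z)"
      by (simp add: inner_sum_left)
    also have "(\<Sum>i\<in>I. w i *\<^sub>R (y i - m)) = m - (\<Sum>i\<in>I. w i) *\<^sub>R m"
      using assms(3) by (simp add: scaleR_diff_right sum_subtractf scaleR_sum_left)
    also have "\<dots> = 0" using assms(2) by simp
    finally show ?thesis by simp
  qed
  have "(\<Sum>i\<in>I. w i * (norm (y i - z))\<^sup>2) = (\<Sum>i\<in>I. w i * (norm (y i - m))\<^sup>2) + 2 * (\<Sum>i\<in>I. w i * inner (y i - m) (m - z)) + (\<Sum>i\<in>I. w i) * (norm (m - z))\<^sup>2"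
  proof -
    have "(\<Sum>i\<in>I. w i * (norm (y i - z))\<^sup>2) = (\<Sum>i\<in>I. w i * (norm (y i - m))\<^sup>2 + 2 * (w i * inner (y i - m) (m - z)) + w i * (norm (m - z))\<^sup>2)"
      by (rule sum.cong[OF refl], subst e) (simp add: distrib_left)
    also have "\<dots> = (\<Sum>i\<in>I. w i * (norm (y i - m))\<^sup>2) + 2 * (\<Sum>i\<in>I. w i * inner (y i - m) (m - z)) + (\<Sum>i\<in>I. w i) * (norm (m - z))\<^sup>2"
      by (simp only: sum.distrib sum_distrib_left sum_distrib_right)
    finally show ?thesis .
  qed
  also have "\<dots> = (\<Sum>i\<in>I. w i * (norm (y i - m))\<^sup>2) + (norm (m - z))\<^sup>2" using c assms(2) by simp
  finally show ?thesis by simp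
qed

lemma sq_split:
  fixes a b :: "'a::real_inner" and \<eta> :: real
  assumes "\<eta> > 0"
  shows "(norm (a + b))\<^sup>2 \<le> (1 + 1 / \<eta>) * (norm a)\<^sup>2 + (1 + \<eta>) * (norm b)\<^sup>2"
proof -
  have "(norm (a + b))\<^sup>2 = (norm a)\<^sup>2 + 2 * inner a b + (norm b)\<^sup>2"
    by (simp add: power2_norm_eq_inner inner_add_left inner_add_right inner_commute)
  also have "2 * inner a b \<le> 2 * (norm a * norm b)"
    using Cauchy_Schwarz_ineq2[of a b] by simp
  also have "2 * (norm a * norm b) \<le> (norm a)\<^sup>2 / \<eta> + \<eta> * (norm b)\<^sup>2"
  proof -
    have "0 \<le> (norm a - \<eta> * norm b)\<^sup>2 / \<eta>" using assms by simp
    also have "(norm a - \<eta> * norm b)\<^sup>2 / \<eta> = (norm a)\<^sup>2 / \<eta> + \<eta> * (norm b)\<^sup>2 - 2 * (norm a * norm b)"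
      using assms by (simp add: power2_eq_square field_simps)
    finally show ?thesis by simp
  qed
  finally show ?thesis by (simp add: algebra_simps)
qed

lemma lam_norm_le:
  fixes y :: "nat \<Rightarrow> 'a::euclidean_space" and gF :: "'a \<Rightarrow> 'a"
  assumes I: "finite I" and w0: "\<And>i. i \<in> I \<Longrightarrow> w i \<ge> 0" and w1: "(\<Sum>i\<in>I. w i) = 1"
    and m: "m = (\<Sum>i\<in>I. w i *\<^sub>R y i)" and lam: "lam \<ge> 0"
    and gFm: "gF \<in> borel_measurable borel"
  shows "lam_norm gF lam m \<le> norm (\<Sum>i\<in>I. w i *\<^sub>R gF (y i)) + lam * (\<Sum>i\<in>I. w i * (norm (y i - m))\<^sup>2)"
proof -
  define f where "f i = (if i \<in> I then w i else 0)" for i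
  have f0: "\<And>i. 0 \<le> f i" using w0 by (simp add: f_def)
  have f1: "(\<integral>\<^sup>+i. ennreal (f i) \<partial>count_space UNIV) = 1"
  proof -
    have "(\<integral>\<^sup>+i. ennreal (f i) \<partial>count_space UNIV) = (\<integral>\<^sup>+i. ennreal (w i) * indicator I i \<partial>count_space UNIV)"
      by (rule nn_integral_cong) (auto simp: f_def)
    also have "\<dots> = (\<integral>\<^sup>+i. ennreal (w i) \<partial>count_space I)"
      by (simp add: nn_integral_count_space_indicator)
    also have "\<dots> = (\<Sum>i\<in>I. ennreal (w i))" using I by (simp add: nn_integral_count_space_finite)
    also have "\<dots> = ennreal (\<Sum>i\<in>I. w i)" using w0 by simp
    finally show ?thesis using w1 by simp
  qed
  define p where "p = embed_pmf f"
  have pp: "pmf p i = f i" for i unfolding p_def using pmf_embed_pmf[OF f0 f1] .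
  have sp: "set_pmf p \<subseteq> I" unfolding set_pmf_eq using pp by (auto simp: f_def)
  have fin: "finite (set_pmf p)" using finite_subset[OF sp I] .
  have intg: "(\<integral>i. h i \<partial>measure_pmf p) = (\<Sum>i\<in>I. w i *\<^sub>R h i)" for h :: "nat \<Rightarrow> 'b::{banach, second_countable_topology}"
  proof -
    have "(\<integral>i. h i \<partial>measure_pmf p) = (\<Sum>i\<in>I. pmf p i *\<^sub>R h i)"
      by (rule integral_measure_pmf[OF I]) (use sp in auto)
    also have "\<dots> = (\<Sum>i\<in>I. w i *\<^sub>R h i)" by (rule sum.cong) (auto simp: pp f_def)
    finally show ?thesis .
  qed
  define P where "P = distr (measure_pmf p) borel y"
  have yP: "y \<in> measurable (measure_pmf p) borel" by simp
  have Pprob: "prob_space P" unfolding P_def by (rule prob_space.prob_space_distr[OF prob_space_measure_pmf yP])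
  have Psets: "sets P = sets borel" unfolding P_def by simp
  have PI: "(\<integral>v. h v \<partial>P) = (\<Sum>i\<in>I. w i *\<^sub>R h (y i))" if hm: "h \<in> borel_measurable borel"
    for h :: "'a \<Rightarrow> 'b::{banach, second_countable_topology}"
    unfolding P_def by (subst integral_distr[OF yP hm]) (rule intg)
  have Pint: "integrable P h" if hm: "h \<in> borel_measurable borel"
    for h :: "'a \<Rightarrow> 'b::{banach, second_countable_topology}"
    unfolding P_def by (subst integrable_distr_eq[OF yP hm]) (rule integrable_measure_pmf_finite[OF fin])
  have mem: "norm (\<integral>v. gF v \<partial>P) + lam * (\<integral>v. (norm (v - m))\<^sup>2 \<partial>P) \<in>
     {norm (\<integral>v. gF v \<partial>p) + lam * (\<integral>v. (norm (v - m))\<^sup>2 \<partial>p) | p.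
      prob_space p \<and> sets p = sets borel \<and> integrable p (\<lambda>v. v) \<and> (\<integral>v. v \<partial>p) = m
      \<and> integrable p (\<lambda>v. (norm (v - m))\<^sup>2)}"
  proof -
    have "(\<integral>v. v \<partial>P) = m" using PI[of "\<lambda>v. v"] m by simp
    moreover have "integrable P (\<lambda>v. v)" by (rule Pint) simp
    moreover have "integrable P (\<lambda>v. (norm (v - m))\<^sup>2)" by (rule Pint) simp
    ultimately show ?thesis using Pprob Psets by blast
  qed
  have bdd: "bdd_below {norm (\<integral>v. gF v \<partial>p) + lam * (\<integral>v. (norm (v - m))\<^sup>2 \<partial>p) | p.
      prob_space p \<and> sets p = sets borel \<and> integrable p (\<lambda>v. v) \<and> (\<integral>v. v \<partial>p) = m
      \<and> integrable p (\<lambda>v. (norm (v - m))\<^sup>2)}"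
    by (rule bdd_belowI[of _ 0]) (use lam in \<open>auto intro!: add_nonneg_nonneg mult_nonneg_nonneg integral_nonneg_AE\<close>)
  have "lam_norm gF lam m \<le> norm (\<integral>v. gF v \<partial>P) + lam * (\<integral>v. (norm (v - m))\<^sup>2 \<partial>P)"
    unfolding lam_norm_def by (rule cInf_lower[OF mem bdd])
  also have "\<dots> = norm (\<Sum>i\<in>I. w i *\<^sub>R gF (y i)) + lam * (\<Sum>i\<in>I. w i * (norm (y i - m))\<^sup>2)"
    using PI[OF gFm] PI[of "\<lambda>v. (norm (v - m))\<^sup>2"] by simp
  finally show ?thesis .
qed

context prob_space
begin

definition SQ :: "('a \<Rightarrow> 'b::euclidean_space) \<Rightarrow> bool" where
  "SQ f \<longleftrightarrow> f \<in> borel_measurable M \<and> integrable M (\<lambda>\<omega>. (norm (f \<omega>))\<^sup>2)"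

lemma SQ_meas: "SQ f \<Longrightarrow> f \<in> borel_measurable M" by (simp add: SQ_def)
lemma SQ_int: "SQ f \<Longrightarrow> integrable M (\<lambda>\<omega>. (norm (f \<omega>))\<^sup>2)" by (simp add: SQ_def)

lemma SQ_bounded:
  assumes "f \<in> borel_measurable M" "\<And>\<omega>. \<omega> \<in> space M \<Longrightarrow> norm (f \<omega>) \<le> B"
  shows "SQ f"
  unfolding SQ_def
proof
  show "f \<in> borel_measurable M" by fact
  show "integrable M (\<lambda>\<omega>. (norm (f \<omega>))\<^sup>2)"
  proof (rule Bochner_Integration.integrable_bound[where f="\<lambda>_. B\<^sup>2"])
    show "integrable M (\<lambda>_. B\<^sup>2)" by simp
    show "(\<lambda>\<omega>. (norm (f \<omega>))\<^sup>2) \<in> borel_measurable M" using assms(1) by measurable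
    show "AE \<omega> in M. norm ((norm (f \<omega>))\<^sup>2) \<le> norm (B\<^sup>2)"
    proof (rule AE_I2)
      fix \<omega> assume "\<omega> \<in> space M"
      then have "norm (f \<omega>) \<le> B" by (rule assms(2))
      then have "(norm (f \<omega>))\<^sup>2 \<le> B\<^sup>2" by (intro power_mono) auto
      then show "norm ((norm (f \<omega>))\<^sup>2) \<le> norm (B\<^sup>2)" by simp
    qed
  qed
qed

lemma SQ_const: "SQ (\<lambda>_. c)" by (rule SQ_bounded[of _ "norm c"]) auto

lemma SQ_add:
  assumes "SQ f" "SQ h"
  shows "SQ (\<lambda>\<omega>. f \<omega> + h \<omega>)"
  unfolding SQ_def
proof
  have [measurable]: "f \<in> borel_measurable M" "h \<in> borel_measurable M" using assms by (auto simp: SQ_def)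
  show "(\<lambda>\<omega>. f \<omega> + h \<omega>) \<in> borel_measurable M" by measurable
  show "integrable M (\<lambda>\<omega>. (norm (f \<omega> + h \<omega>))\<^sup>2)"
  proof (rule Bochner_Integration.integrable_bound[where f="\<lambda>\<omega>. 2 * (norm (f \<omega>))\<^sup>2 + 2 * (norm (h \<omega>))\<^sup>2"])
    show "integrable M (\<lambda>\<omega>. 2 * (norm (f \<omega>))\<^sup>2 + 2 * (norm (h \<omega>))\<^sup>2)"
      using assms by (auto simp: SQ_def)
    show "(\<lambda>\<omega>. (norm (f \<omega> + h \<omega>))\<^sup>2) \<in> borel_measurable M" by measurable
    show "AE \<omega> in M. norm ((norm (f \<omega> + h \<omega>))\<^sup>2) \<le> norm (2 * (norm (f \<omega>))\<^sup>2 + 2 * (norm (h \<omega>))\<^sup>2)"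
    proof (rule AE_I2)
      fix \<omega>
      have "(norm (f \<omega> + h \<omega>))\<^sup>2 \<le> (norm (f \<omega>) + norm (h \<omega>))\<^sup>2"
        by (intro power_mono norm_triangle_ineq) auto
      also have "\<dots> \<le> 2 * (norm (f \<omega>))\<^sup>2 + 2 * (norm (h \<omega>))\<^sup>2"
      proof -
        have "0 \<le> (norm (f \<omega>) - norm (h \<omega>))\<^sup>2" by simp
        then show ?thesis by (simp add: power2_sum power2_diff)
      qed
      finally show "norm ((norm (f \<omega> + h \<omega>))\<^sup>2) \<le> norm (2 * (norm (f \<omega>))\<^sup>2 + 2 * (norm (h \<omega>))\<^sup>2)"
        by simp
    qed
  qed
qed

lemma SQ_scale:
  assumes "SQ f"
  shows "SQ (\<lambda>\<omega>. c *\<^sub>R f \<omega>)"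
  unfolding SQ_def
proof
  have [measurable]: "f \<in> borel_measurable M" using assms by (auto simp: SQ_def)
  show "(\<lambda>\<omega>. c *\<^sub>R f \<omega>) \<in> borel_measurable M" by measurable
  have "integrable M (\<lambda>\<omega>. c\<^sup>2 * (norm (f \<omega>))\<^sup>2)" using assms by (auto simp: SQ_def)
  then show "integrable M (\<lambda>\<omega>. (norm (c *\<^sub>R f \<omega>))\<^sup>2)" by (simp add: power_mult_distrib)
qed

lemma SQ_uminus: "SQ f \<Longrightarrow> SQ (\<lambda>\<omega>. - f \<omega>)"
  using SQ_scale[of f "-1"] by simp

lemma SQ_diff: "SQ f \<Longrightarrow> SQ h \<Longrightarrow> SQ (\<lambda>\<omega>. f \<omega> - h \<omega>)"
  using SQ_add[of f "\<lambda>\<omega>. - h \<omega>"] SQ_uminus[of h] by simp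

lemma SQ_sum:
  assumes "finite I" "\<And>i. i \<in> I \<Longrightarrow> SQ (f i)"
  shows "SQ (\<lambda>\<omega>. \<Sum>i\<in>I. f i \<omega>)"
  using assms
proof (induction I rule: finite_induct)
  case empty then show ?case using SQ_const[of 0] by simp
next
  case (insert i I)
  then show ?case using SQ_add[of "f i" "\<lambda>\<omega>. \<Sum>i\<in>I. f i \<omega>"] by simp
qed

lemma SQ_norm_int:
  assumes "SQ f" shows "integrable M (\<lambda>\<omega>. norm (f \<omega>))"
proof (rule Bochner_Integration.integrable_bound[where f="\<lambda>\<omega>. 1 + (norm (f \<omega>))\<^sup>2"])
  have [measurable]: "f \<in> borel_measurable M" using assms by (auto simp: SQ_def)
  show "integrable M (\<lambda>\<omega>. 1 + (norm (f \<omega>))\<^sup>2)" using assms by (auto simp: SQ_def)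
  show "(\<lambda>\<omega>. norm (f \<omega>)) \<in> borel_measurable M" by measurable
  show "AE \<omega> in M. norm (norm (f \<omega>)) \<le> norm (1 + (norm (f \<omega>))\<^sup>2)"
  proof (rule AE_I2)
    fix \<omega>
    have "norm (f \<omega>) \<le> 1 + (norm (f \<omega>))\<^sup>2"
    proof -
      have "0 \<le> (norm (f \<omega>) - 1)\<^sup>2" by simp
      then show ?thesis by (simp add: power2_diff) (smt (verit) norm_ge_zero)
    qed
    then show "norm (norm (f \<omega>)) \<le> norm (1 + (norm (f \<omega>))\<^sup>2)" by simp
  qed
qed

lemma SQ_inner_int:
  assumes "SQ f" "SQ h" shows "integrable M (\<lambda>\<omega>. inner (f \<omega>) (h \<omega>))"
proof (rule Bochner_Integration.integrable_bound[where f="\<lambda>\<omega>. (norm (f \<omega>))\<^sup>2 + (norm (h \<omega>))\<^sup>2"])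
  have [measurable]: "f \<in> borel_measurable M" "h \<in> borel_measurable M" using assms by (auto simp: SQ_def)
  show "integrable M (\<lambda>\<omega>. (norm (f \<omega>))\<^sup>2 + (norm (h \<omega>))\<^sup>2)" using assms by (auto simp: SQ_def)
  show "(\<lambda>\<omega>. inner (f \<omega>) (h \<omega>)) \<in> borel_measurable M" by measurable
  show "AE \<omega> in M. norm (inner (f \<omega>) (h \<omega>)) \<le> norm ((norm (f \<omega>))\<^sup>2 + (norm (h \<omega>))\<^sup>2)"
  proof (rule AE_I2)
    fix \<omega>
    have "\<bar>inner (f \<omega>) (h \<omega>)\<bar> \<le> norm (f \<omega>) * norm (h \<omega>)" by (rule Cauchy_Schwarz_ineq2)
    also have "\<dots> \<le> (norm (f \<omega>))\<^sup>2 + (norm (h \<omega>))\<^sup>2"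
    proof -
      have "0 \<le> (norm (f \<omega>) - norm (h \<omega>))\<^sup>2" by simp
      moreover have "0 \<le> norm (f \<omega>) * norm (h \<omega>)" by simp
      ultimately show ?thesis unfolding power2_diff mult.assoc by linarith
    qed
    finally show "norm (inner (f \<omega>) (h \<omega>)) \<le> norm ((norm (f \<omega>))\<^sup>2 + (norm (h \<omega>))\<^sup>2)" by simp
  qed
qed

lemma SQ_real_int:
  fixes f :: "'a \<Rightarrow> real"
  assumes "SQ f" shows "integrable M f"
  using SQ_norm_int[OF assms] assms by (simp add: SQ_def integrable_abs_iff)

end

locale setting = prob_space M for M :: "'w measure" +
  fixes F :: "'a::euclidean_space \<Rightarrow> real" and gF :: "'a \<Rightarrow> 'a"
    and G \<sigma> lam eps beta mu :: real and T :: nat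
    and x0 :: 'a
    and D x g :: "nat \<Rightarrow> 'w \<Rightarrow> 'a" and s :: "nat \<Rightarrow> 'w \<Rightarrow> real"
    and Gs Hs Fh :: "nat \<Rightarrow> 'w measure"
  assumes F_deriv: "\<And>z. (F has_derivative (\<lambda>h. gF z \<bullet> h)) (at z)"
    and F_ftc: "\<And>z w. ((\<lambda>r. gF (w + r *\<^sub>R (z - w)) \<bullet> (z - w)) has_integral (F z - F w)) {0..1}"
    and G_bound: "\<And>z. norm (gF z) \<le> G"
    and sigma_nonneg: "\<sigma> \<ge> 0"
    \<comment> \<open>information structure: Gs t = history before s_t (contains Delta_t, x_t),
        Hs t = history including s_t (the oracle is queried given it),
        Fh t = history after round t\<close>
    and Fh0: "subalgebra M (Fh 0)"
    and sub_Gs: "\<And>t. t \<in> {1..T} \<Longrightarrow> subalgebra M (Gs t)"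
    and sub_Hs: "\<And>t. t \<in> {1..T} \<Longrightarrow> subalgebra M (Hs t)"
    and sub_Fh: "\<And>t. t \<in> {1..T} \<Longrightarrow> subalgebra M (Fh t)"
    and filt1: "\<And>t. t \<in> {1..T} \<Longrightarrow> sets (Fh (t - 1)) \<subseteq> sets (Gs t)"
    and filt2: "\<And>t. t \<in> {1..T} \<Longrightarrow> sets (Gs t) \<subseteq> sets (Hs t)"
    and filt3: "\<And>t. t \<in> {1..T} \<Longrightarrow> sets (Hs t) \<subseteq> sets (Fh t)"
    \<comment> \<open>x_0 = w_0 is the deterministic input\<close>
    and x_0: "\<And>\<omega>. x 0 \<omega> = x0"
    \<comment> \<open>Delta_t (learner output) and x_t chosen before s_t, g_t\<close>
    and D_meas: "\<And>t. t \<in> {1..T} \<Longrightarrow> D t \<in> borel_measurable (Gs t)"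
    and x_meas: "\<And>t. t \<in> {1..T} \<Longrightarrow> x t \<in> borel_measurable (Gs t)"
    and D_sq: "\<And>t. t \<in> {1..T} \<Longrightarrow> integrable M (\<lambda>\<omega>. (norm (D t \<omega>))\<^sup>2)"
    and x_sq: "\<And>t. t \<in> {1..T} \<Longrightarrow> integrable M (\<lambda>\<omega>. (norm (x t \<omega> - x (t - 1) \<omega>))\<^sup>2)"
    and s_meas: "\<And>t. t \<in> {1..T} \<Longrightarrow> s t \<in> borel_measurable (Hs t)"
    and s_unif: "\<And>t. t \<in> {1..T} \<Longrightarrow> distr M lborel (s t) = uniform_measure lborel {0..1}"
    and s_indep: "\<And>t A B. t \<in> {1..T} \<Longrightarrow> A \<in> sets (Gs t) \<Longrightarrow> B \<in> sets borel \<Longrightarrow>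
        measure M (A \<inter> (s t -` B \<inter> space M)) = measure M A * measure M (s t -` B \<inter> space M)"
    \<comment> \<open>g_t: stochastic gradient oracle output at y_t = x_t + s_t Delta_t\<close>
    and g_meas: "\<And>t. t \<in> {1..T} \<Longrightarrow> g t \<in> borel_measurable (Fh t)"
    and g_sq: "\<And>t. t \<in> {1..T} \<Longrightarrow>
        integrable M (\<lambda>\<omega>. (norm (g t \<omega> - gF (x t \<omega> + s t \<omega> *\<^sub>R D t \<omega>)))\<^sup>2)"
    and g_unbiased: "\<And>t b. t \<in> {1..T} \<Longrightarrow> b \<in> Basis \<Longrightarrow>
        AE \<omega> in M. real_cond_exp M (Hs t) (\<lambda>\<omega>. g t \<omega> \<bullet> b) \<omega>
                    = gF (x t \<omega> + s t \<omega> *\<^sub>R D t \<omega>) \<bullet> b"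
    and g_var: "\<And>t. t \<in> {1..T} \<Longrightarrow>
        AE \<omega> in M. real_cond_exp M (Hs t)
           (\<lambda>\<omega>. (norm (g t \<omega> - gF (x t \<omega> + s t \<omega> *\<^sub>R D t \<omega>)))\<^sup>2) \<omega> \<le> \<sigma>\<^sup>2"
    and regret: "\<And>t u. t \<in> {1..T} \<Longrightarrow> u \<in> borel_measurable M \<Longrightarrow>
        (\<exists>B. \<forall>\<omega>\<in>space M. norm (u \<omega>) \<le> B) \<Longrightarrow>
        (\<integral>\<omega>. disc_regret beta mu (\<lambda>i. g i \<omega>) (\<lambda>i. D i \<omega>) t (u \<omega>) \<partial>M)
          \<le> (\<integral>\<omega>. 2 * norm (u \<omega>) * (G + \<sigma>) / (beta * sqrt (1 - beta))
                    + mu / 2 * (norm (u \<omega>))\<^sup>2 \<partial>M)"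
    \<comment> \<open>C_x is well defined (finite)\<close>
    and Cx_exists: "\<exists>C\<ge>0. (\<integral>\<omega>. (\<Sum>t=1..T. (norm (x t \<omega> - x (t - 1) \<omega>))\<^sup>2) \<partial>M)
        \<le> C * (\<integral>\<omega>. (\<Sum>t=1..T. (norm (D t \<omega>))\<^sup>2) \<partial>M)"
    and lam_pos: "lam > 0"
    and eps_pos: "eps > 0"
    and eps_le: "eps \<le> 7 / 2 * (G + \<sigma>)"
    and T_ge: "real T \<ge> 49 * (G + \<sigma>)\<^sup>2 / eps\<^sup>2"
    and beta_def: "beta = 1 - (eps / (7 * (G + \<sigma>)))\<^sup>2"
    and mu_def: "mu = 2 * sqrt lam * sqrt eps
        * (1 + 49 * (G + \<sigma>)\<^sup>2 / eps\<^sup>2 * sqrt (Cx M x D T))"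

begin

lemma G0: "G \<ge> 0" using G_bound[of 0] norm_ge_zero order_trans by blast

definition "a = G + \<sigma>"
definition "kap = eps / (7 * a)"

lemma a_pos: "a > 0"
proof -
  have "0 < 7 / 2 * (G + \<sigma>)" using eps_pos eps_le by linarith
  then show ?thesis unfolding a_def by (simp add: zero_less_mult_iff)
qed
lemma sig_le_a: "\<sigma> \<le> a" using G0 unfolding a_def by simp
lemma kap_pos: "kap > 0" using eps_pos a_pos unfolding kap_def by simp
lemma kap_le: "kap \<le> 1/2" using eps_le a_pos unfolding kap_def a_def[symmetric] by (simp add: field_simps)
lemma beta_kap: "beta = 1 - kap\<^sup>2" using beta_def unfolding kap_def a_def by simp
lemma eps_kap: "eps = 7 * a * kap" using a_pos unfolding kap_def by simp
lemma beta_ge: "beta \<ge> 3/4"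
proof -
  have "kap\<^sup>2 \<le> (1/2)\<^sup>2" using kap_pos kap_le by (intro power_mono) auto
  then show ?thesis using beta_kap by (simp add: power2_eq_square)
qed
lemma beta_lt: "beta < 1" using beta_kap kap_pos by simp
lemma beta_pos: "beta > 0" using beta_ge by simp
lemma sqrt_1_beta: "sqrt (1 - beta) = kap" using beta_kap kap_pos by simp
lemma T_kap: "kap\<^sup>2 * real T \<ge> 1"
proof -
  have "49 * (G + \<sigma>)\<^sup>2 / eps\<^sup>2 = 1 / kap\<^sup>2"
    unfolding kap_def a_def using eps_pos by (simp add: power_divide field_simps power2_eq_square)
  then have "real T \<ge> 1 / kap\<^sup>2" using T_ge by simp
  then show ?thesis using kap_pos by (simp add: field_simps)
qed
lemma T_pos: "T \<ge> 1"
proof -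
  have "kap\<^sup>2 \<le> 1" using kap_pos kap_le by (simp add: power_le_one)
  then have "kap\<^sup>2 * real T \<le> real T" using mult_right_mono[of "kap\<^sup>2" 1 "real T"] by simp
  then show ?thesis using T_kap by simp
qed

lemma meas_up:
  assumes "sets A \<subseteq> sets B" "space A = space B" "f \<in> borel_measurable A"
  shows "f \<in> borel_measurable B"
  using measurable_from_subalg[of B A f borel] assms by (simp add: subalgebra_def)

lemma sp_G: "t \<in> {1..T} \<Longrightarrow> space (Gs t) = space M" using sub_Gs by (simp add: subalgebra_def)
lemma sp_H: "t \<in> {1..T} \<Longrightarrow> space (Hs t) = space M" using sub_Hs by (simp add: subalgebra_def)
lemma sp_F: "t \<in> {1..T} \<Longrightarrow> space (Fh t) = space M" using sub_Fh by (simp add: subalgebra_def)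

lemma GM: "t \<in> {1..T} \<Longrightarrow> f \<in> borel_measurable (Gs t) \<Longrightarrow> f \<in> borel_measurable M"
  using measurable_from_subalg sub_Gs by blast
lemma HM: "t \<in> {1..T} \<Longrightarrow> f \<in> borel_measurable (Hs t) \<Longrightarrow> f \<in> borel_measurable M"
  using measurable_from_subalg sub_Hs by blast
lemma FM: "t \<in> {1..T} \<Longrightarrow> f \<in> borel_measurable (Fh t) \<Longrightarrow> f \<in> borel_measurable M"
  using measurable_from_subalg sub_Fh by blast
lemma GH: "t \<in> {1..T} \<Longrightarrow> f \<in> borel_measurable (Gs t) \<Longrightarrow> f \<in> borel_measurable (Hs t)"
  by (rule meas_up[OF filt2]) (auto simp: sp_G sp_H)
lemma HF: "t \<in> {1..T} \<Longrightarrow> f \<in> borel_measurable (Hs t) \<Longrightarrow> f \<in> borel_measurable (Fh t)"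
  by (rule meas_up[OF filt3]) (auto simp: sp_H sp_F)

lemma chain: "1 \<le> i \<Longrightarrow> i < r \<Longrightarrow> r \<le> T \<Longrightarrow> sets (Fh i) \<subseteq> sets (Hs r)"
proof (induction r)
  case 0 then show ?case by simp
next
  case (Suc r)
  have r1: "Suc r \<in> {1..T}" using Suc by simp
  show ?case
  proof (cases "i = r")
    case True
    then show ?thesis using filt1[OF r1] filt2[OF r1] by simp
  next
    case False
    then have "sets (Fh i) \<subseteq> sets (Hs r)" using Suc by simp
    also have "\<dots> \<subseteq> sets (Fh r)" using filt3[of r] Suc False by simp
    also have "\<dots> \<subseteq> sets (Gs (Suc r))" using filt1[OF r1] by simp
    also have "\<dots> \<subseteq> sets (Hs (Suc r))" using filt2[OF r1] by simp
    finally show ?thesis .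
  qed
qed

lemma FH: "1 \<le> i \<Longrightarrow> i < r \<Longrightarrow> r \<le> T \<Longrightarrow> f \<in> borel_measurable (Fh i) \<Longrightarrow> f \<in> borel_measurable (Hs r)"
  by (rule meas_up[OF chain]) (auto simp: sp_H sp_F)

definition "Y t \<omega> = x t \<omega> + s t \<omega> *\<^sub>R D t \<omega>"
definition "xi t \<omega> = g t \<omega> - gF (Y t \<omega>)"

lemma gFm[measurable]: "gF \<in> borel_measurable borel" by (rule gF_meas[OF F_deriv])
lemma Fm[measurable]: "F \<in> borel_measurable borel"
proof -
  have "continuous_on UNIV F"
    using F_deriv has_derivative_continuous continuous_at_imp_continuous_on by blast
  then show ?thesis using borel_measurable_continuous_onI by blast
qed

lemma YH: "t \<in> {1..T} \<Longrightarrow> Y t \<in> borel_measurable (Hs t)"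
proof -
  assume t: "t \<in> {1..T}"
  have [measurable]: "x t \<in> borel_measurable (Hs t)" "D t \<in> borel_measurable (Hs t)"
    using GH[OF t] x_meas[OF t] D_meas[OF t] by auto
  have [measurable]: "s t \<in> borel_measurable (Hs t)" using s_meas[OF t] .
  show ?thesis unfolding Y_def by measurable
qed

lemma xiF: "t \<in> {1..T} \<Longrightarrow> xi t \<in> borel_measurable (Fh t)"
proof -
  assume t: "t \<in> {1..T}"
  have [measurable]: "Y t \<in> borel_measurable (Fh t)" using HF[OF t YH[OF t]] .
  have [measurable]: "g t \<in> borel_measurable (Fh t)" using g_meas[OF t] .
  show ?thesis unfolding xi_def by measurable
qed

lemma Dm: "t \<in> {1..T} \<Longrightarrow> D t \<in> borel_measurable M" using GM D_meas by blast
lemma xm: "t \<le> T \<Longrightarrow> x t \<in> borel_measurable M"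
proof -
  assume "t \<le> T"
  show ?thesis
  proof (cases "t = 0")
    case True
    have "x 0 = (\<lambda>_. x0)" using x_0 by auto
    then show ?thesis using True by simp
  next
    case False
    then have "t \<in> {1..T}" using \<open>t \<le> T\<close> by simp
    then show ?thesis using GM x_meas by blast
  qed
qed
lemma sm: "t \<in> {1..T} \<Longrightarrow> s t \<in> borel_measurable M" using HM s_meas by blast
lemma gm: "t \<in> {1..T} \<Longrightarrow> g t \<in> borel_measurable M" using FM g_meas by blast
lemma Ym: "t \<in> {1..T} \<Longrightarrow> Y t \<in> borel_measurable M" using HM YH by blast
lemma xim: "t \<in> {1..T} \<Longrightarrow> xi t \<in> borel_measurable M" using FM xiF by blast

lemma SQ_D: "t \<in> {1..T} \<Longrightarrow> SQ (D t)" unfolding SQ_def using Dm D_sq by blast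
lemma SQ_xi: "t \<in> {1..T} \<Longrightarrow> SQ (xi t)" unfolding SQ_def using xim g_sq by (simp add: xi_def Y_def)
lemma SQ_gFY: "t \<in> {1..T} \<Longrightarrow> SQ (\<lambda>\<omega>. gF (Y t \<omega>))"
  by (rule SQ_bounded[of _ G]) (use Ym G_bound in auto)
lemma SQ_g: "t \<in> {1..T} \<Longrightarrow> SQ (g t)"
  using SQ_add[OF SQ_xi[of t] SQ_gFY[of t]] by (simp add: xi_def)
lemma SQ_dx: "t \<in> {1..T} \<Longrightarrow> SQ (\<lambda>\<omega>. x t \<omega> - x (t - 1) \<omega>)"
  unfolding SQ_def using x_sq xm by auto

end

context setting
begin

lemma sfs: "t \<in> {1..T} \<Longrightarrow> sigma_finite_subalgebra M (Hs t)"
proof -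
  assume t: "t \<in> {1..T}"
  have "finite_measure_subalgebra M (Hs t)"
    by unfold_locales (rule sub_Hs[OF t])
  then show ?thesis by (rule finite_measure_subalgebra_is_sigma_finite)
qed

lemma SQ_comp:
  assumes "SQ f" "b \<in> Basis"
  shows "SQ (\<lambda>\<omega>. f \<omega> \<bullet> b)"
  unfolding SQ_def
proof
  have [measurable]: "f \<in> borel_measurable M" using assms by (simp add: SQ_def)
  show "(\<lambda>\<omega>. f \<omega> \<bullet> b) \<in> borel_measurable M" by measurable
  show "integrable M (\<lambda>\<omega>. (norm (f \<omega> \<bullet> b))\<^sup>2)"
  proof (rule Bochner_Integration.integrable_bound[where f="\<lambda>\<omega>. (norm (f \<omega>))\<^sup>2"])
    show "integrable M (\<lambda>\<omega>. (norm (f \<omega>))\<^sup>2)" using assms by (simp add: SQ_def)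
    show "(\<lambda>\<omega>. (norm (f \<omega> \<bullet> b))\<^sup>2) \<in> borel_measurable M" by measurable
    show "AE \<omega> in M. norm ((norm (f \<omega> \<bullet> b))\<^sup>2) \<le> norm ((norm (f \<omega>))\<^sup>2)"
    proof (rule AE_I2)
      fix \<omega>
      have "\<bar>f \<omega> \<bullet> b\<bar> \<le> \<bar>norm (f \<omega>)\<bar>" using Basis_le_norm[OF assms(2)] by simp
      then have "(f \<omega> \<bullet> b)\<^sup>2 \<le> (norm (f \<omega>))\<^sup>2" by (simp only: abs_le_square_iff)
      then show "norm ((norm (f \<omega> \<bullet> b))\<^sup>2) \<le> norm ((norm (f \<omega>))\<^sup>2)" by simp
    qed
  qed
qed

lemma ce_step:
  assumes t: "t \<in> {1..T}" and b: "b \<in> Basis"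
    and fH: "f \<in> borel_measurable (Hs t)" and fS: "SQ f"
  shows "(\<integral>\<omega>. f \<omega> * (g t \<omega> \<bullet> b) \<partial>M) = (\<integral>\<omega>. f \<omega> * (gF (Y t \<omega>) \<bullet> b) \<partial>M)"
proof -
  interpret sigma_finite_subalgebra M "Hs t" by (rule sfs[OF t])
  have gb: "SQ (\<lambda>\<omega>. g t \<omega> \<bullet> b)" by (rule SQ_comp[OF SQ_g[OF t] b])
  have int: "integrable M (\<lambda>\<omega>. f \<omega> * (g t \<omega> \<bullet> b))"
    using SQ_inner_int[OF fS gb] by simp
  have gbm: "(\<lambda>\<omega>. g t \<omega> \<bullet> b) \<in> borel_measurable M" using gb by (simp add: SQ_def)
  have fM: "f \<in> borel_measurable M" using fS by (simp add: SQ_def)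
  have "(\<integral>\<omega>. f \<omega> * (g t \<omega> \<bullet> b) \<partial>M) = (\<integral>\<omega>. f \<omega> * real_cond_exp M (Hs t) (\<lambda>\<omega>. g t \<omega> \<bullet> b) \<omega> \<partial>M)"
    using real_cond_exp_intg(2)[OF int fH gbm] by simp
  also have "\<dots> = (\<integral>\<omega>. f \<omega> * (gF (Y t \<omega>) \<bullet> b) \<partial>M)"
  proof (rule integral_cong_AE)
    show "(\<lambda>\<omega>. f \<omega> * real_cond_exp M (Hs t) (\<lambda>\<omega>. g t \<omega> \<bullet> b) \<omega>) \<in> borel_measurable M"
      using fM by measurable
    show "(\<lambda>\<omega>. f \<omega> * (gF (Y t \<omega>) \<bullet> b)) \<in> borel_measurable M"
      using fM Ym[OF t] by measurable
    show "AE \<omega> in M. f \<omega> * real_cond_exp M (Hs t) (\<lambda>\<omega>. g t \<omega> \<bullet> b) \<omega> = f \<omega> * (gF (Y t \<omega>) \<bullet> b)"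
      using g_unbiased[OF t b] by eventually_elim (simp add: Y_def)
  qed
  finally show ?thesis .
qed

lemma inner_expand:
  fixes u v :: "'w \<Rightarrow> 'a"
  assumes "SQ u" "SQ v"
  shows "(\<integral>\<omega>. u \<omega> \<bullet> v \<omega> \<partial>M) = (\<Sum>b\<in>Basis. \<integral>\<omega>. (u \<omega> \<bullet> b) * (v \<omega> \<bullet> b) \<partial>M)"
proof -
  have "(\<integral>\<omega>. u \<omega> \<bullet> v \<omega> \<partial>M) = (\<integral>\<omega>. (\<Sum>b\<in>Basis. (u \<omega> \<bullet> b) * (v \<omega> \<bullet> b)) \<partial>M)"
    by (simp add: euclidean_inner[of "u _" "v _"])
  also have "\<dots> = (\<Sum>b\<in>Basis. \<integral>\<omega>. (u \<omega> \<bullet> b) * (v \<omega> \<bullet> b) \<partial>M)"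
  proof (rule Bochner_Integration.integral_sum)
    fix b :: 'a assume b: "b \<in> Basis"
    show "integrable M (\<lambda>\<omega>. (u \<omega> \<bullet> b) * (v \<omega> \<bullet> b))"
      using SQ_inner_int[OF SQ_comp[OF assms(1) b] SQ_comp[OF assms(2) b]] by simp
  qed
  finally show ?thesis .
qed

lemma E_gD:
  assumes t: "t \<in> {1..T}"
  shows "(\<integral>\<omega>. g t \<omega> \<bullet> D t \<omega> \<partial>M) = (\<integral>\<omega>. F (x t \<omega> + D t \<omega>) - F (x t \<omega>) \<partial>M)"
proof -
  have DH: "(\<lambda>\<omega>. D t \<omega> \<bullet> b) \<in> borel_measurable (Hs t)" for b
  proof -
    have [measurable]: "D t \<in> borel_measurable (Hs t)" using GH[OF t D_meas[OF t]] .
    show ?thesis by measurable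
  qed
  have "(\<integral>\<omega>. g t \<omega> \<bullet> D t \<omega> \<partial>M) = (\<integral>\<omega>. D t \<omega> \<bullet> g t \<omega> \<partial>M)" by (simp add: inner_commute)
  also have "\<dots> = (\<Sum>b\<in>Basis. \<integral>\<omega>. (D t \<omega> \<bullet> b) * (g t \<omega> \<bullet> b) \<partial>M)"
    by (rule inner_expand[OF SQ_D[OF t] SQ_g[OF t]])
  also have "\<dots> = (\<Sum>b\<in>Basis. \<integral>\<omega>. (D t \<omega> \<bullet> b) * (gF (Y t \<omega>) \<bullet> b) \<partial>M)"
    by (rule sum.cong[OF refl], rule ce_step[OF t _ DH SQ_comp[OF SQ_D[OF t]]]) auto
  also have "\<dots> = (\<integral>\<omega>. D t \<omega> \<bullet> gF (Y t \<omega>) \<partial>M)"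
    by (rule inner_expand[OF SQ_D[OF t] SQ_gFY[OF t], symmetric])
  also have "\<dots> = (\<integral>\<omega>. gF (x t \<omega> + s t \<omega> *\<^sub>R D t \<omega>) \<bullet> D t \<omega> \<partial>M)"
    by (simp add: Y_def inner_commute)
  also have "\<dots> = (\<integral>\<omega>. F (x t \<omega> + D t \<omega>) - F (x t \<omega>) \<partial>M)"
  proof (rule indep_ftc[OF prob_space_axioms sub_Gs[OF t] x_meas[OF t] D_meas[OF t] sm[OF t] s_unif[OF t]])
    show "\<And>A B. A \<in> sets (Gs t) \<Longrightarrow> B \<in> sets borel \<Longrightarrow>
        measure M (A \<inter> (s t -` B \<inter> space M)) = measure M A * measure M (s t -` B \<inter> space M)"
      using s_indep[OF t] by blast
    show "gF \<in> borel_measurable borel" by (rule gFm)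
    show "F \<in> borel_measurable borel" by (rule Fm)
    show "\<And>z. norm (gF z) \<le> G" by (rule G_bound)
    show "\<And>z w. ((\<lambda>r. gF (w + r *\<^sub>R (z - w)) \<bullet> (z - w)) has_integral F z - F w) {0..1}" by (rule F_ftc)
    show "integrable M (\<lambda>\<omega>. norm (D t \<omega>))" by (rule SQ_norm_int[OF SQ_D[OF t]])
  qed
  finally show ?thesis .
qed

lemma E_xi_sq:
  assumes t: "t \<in> {1..T}"
  shows "(\<integral>\<omega>. (norm (xi t \<omega>))\<^sup>2 \<partial>M) \<le> \<sigma>\<^sup>2"
proof -
  interpret sigma_finite_subalgebra M "Hs t" by (rule sfs[OF t])
  have int: "integrable M (\<lambda>\<omega>. (norm (xi t \<omega>))\<^sup>2)" using SQ_xi[OF t] by (simp add: SQ_def)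
  have "(\<integral>\<omega>. (norm (xi t \<omega>))\<^sup>2 \<partial>M) = (\<integral>\<omega>. real_cond_exp M (Hs t) (\<lambda>\<omega>. (norm (xi t \<omega>))\<^sup>2) \<omega> \<partial>M)"
    using real_cond_exp_int(2)[OF int] by simp
  also have "\<dots> \<le> (\<integral>\<omega>. \<sigma>\<^sup>2 \<partial>M)"
  proof (rule integral_mono_AE)
    show "integrable M (real_cond_exp M (Hs t) (\<lambda>\<omega>. (norm (xi t \<omega>))\<^sup>2))"
      using real_cond_exp_int(1)[OF int] .
    show "integrable M (\<lambda>\<omega>. \<sigma>\<^sup>2)" by simp
    show "AE \<omega> in M. real_cond_exp M (Hs t) (\<lambda>\<omega>. (norm (xi t \<omega>))\<^sup>2) \<omega> \<le> \<sigma>\<^sup>2"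
      using g_var[OF t] by (simp add: xi_def Y_def)
  qed
  also have "\<dots> = \<sigma>\<^sup>2" by (simp add: prob_space)
  finally show ?thesis .
qed

lemma E_xi_orth:
  assumes i: "1 \<le> i" "i < r" and r: "r \<le> T"
  shows "(\<integral>\<omega>. xi i \<omega> \<bullet> xi r \<omega> \<partial>M) = 0"
proof -
  have it: "i \<in> {1..T}" and rt: "r \<in> {1..T}" using i r by auto
  have xH: "(\<lambda>\<omega>. xi i \<omega> \<bullet> b) \<in> borel_measurable (Hs r)" for b
  proof -
    have [measurable]: "xi i \<in> borel_measurable (Hs r)" using FH[OF i r xiF[OF it]] .
    show ?thesis by measurable
  qed
  have "(\<integral>\<omega>. xi i \<omega> \<bullet> xi r \<omega> \<partial>M) = (\<Sum>b\<in>Basis. \<integral>\<omega>. (xi i \<omega> \<bullet> b) * (xi r \<omega> \<bullet> b) \<partial>M)"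
    by (rule inner_expand[OF SQ_xi[OF it] SQ_xi[OF rt]])
  also have "\<dots> = 0"
  proof (rule sum.neutral, rule ballI)
    fix b :: 'a assume b: "b \<in> Basis"
    have S1: "SQ (\<lambda>\<omega>. xi i \<omega> \<bullet> b)" by (rule SQ_comp[OF SQ_xi[OF it] b])
    have S2: "SQ (\<lambda>\<omega>. g r \<omega> \<bullet> b)" by (rule SQ_comp[OF SQ_g[OF rt] b])
    have S3: "SQ (\<lambda>\<omega>. gF (Y r \<omega>) \<bullet> b)" by (rule SQ_comp[OF SQ_gFY[OF rt] b])
    have "(\<integral>\<omega>. (xi i \<omega> \<bullet> b) * (xi r \<omega> \<bullet> b) \<partial>M)
        = (\<integral>\<omega>. (xi i \<omega> \<bullet> b) * (g r \<omega> \<bullet> b) - (xi i \<omega> \<bullet> b) * (gF (Y r \<omega>) \<bullet> b) \<partial>M)"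
      by (simp add: xi_def inner_diff_left right_diff_distrib)
    also have "\<dots> = (\<integral>\<omega>. (xi i \<omega> \<bullet> b) * (g r \<omega> \<bullet> b) \<partial>M) - (\<integral>\<omega>. (xi i \<omega> \<bullet> b) * (gF (Y r \<omega>) \<bullet> b) \<partial>M)"
      using SQ_inner_int[OF S1 S2] SQ_inner_int[OF S1 S3] by (intro Bochner_Integration.integral_diff) auto
    also have "\<dots> = 0" using ce_step[OF rt b xH S1] by simp
    finally show "(\<integral>\<omega>. (xi i \<omega> \<bullet> b) * (xi r \<omega> \<bullet> b) \<partial>M) = 0" .
  qed
  finally show ?thesis by simp
qed

lemma AE_s01: "AE \<omega> in M. \<forall>t\<in>{1..T}. s t \<omega> \<in> {0..1}"
proof -
  have "AE \<omega> in M. s t \<omega> \<in> {0..1}" if t: "t \<in> {1..T}" for t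
  proof -
    have sM: "s t \<in> measurable M lborel" using sm[OF t] by simp
    have "emeasure M (s t -` (- {0..1}) \<inter> space M) = emeasure (distr M lborel (s t)) (- {0..1})"
      by (rule emeasure_distr[OF sM, symmetric]) auto
    also have "\<dots> = emeasure (uniform_measure lborel {0..1::real}) (- {0..1})" using s_unif[OF t] by simp
    also have "\<dots> = 0" by (simp add: emeasure_uniform_measure)
    finally have "emeasure M (s t -` (- {0..1}) \<inter> space M) = 0" .
    then show ?thesis
      by (intro AE_I[where N="s t -` (- {0..1}) \<inter> space M"]) (auto intro: measurable_sets[OF sM])
  qed
  then show ?thesis by (subst AE_finite_all) auto
qed

end

context setting
begin

definition "Sg t \<omega> = (\<Sum>i=1..t. beta ^ (t - i) *\<^sub>R g i \<omega>)"
definition "wt t i = (1 - beta) * beta ^ (t - i) / (1 - beta ^ t)"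
definition "Z t \<omega> = (\<Sum>i=1..t. wt t i *\<^sub>R xi i \<omega>)"

lemma beta_pow_lt: "t \<ge> 1 \<Longrightarrow> beta ^ t < 1"
  using beta_pos beta_lt by (simp add: power_less_one_iff)

lemma wt_nonneg: "t \<ge> 1 \<Longrightarrow> wt t i \<ge> 0"
  unfolding wt_def using beta_pos beta_lt beta_pow_lt[of t] by (intro divide_nonneg_pos) auto

lemma wt_sum: "t \<ge> 1 \<Longrightarrow> (\<Sum>i=1..t. wt t i) = 1"
proof -
  assume t: "t \<ge> 1"
  have "(\<Sum>i=1..t. wt t i) = ((1 - beta) * (\<Sum>i=1..t. beta ^ (t - i))) / (1 - beta ^ t)"
    unfolding wt_def by (simp add: sum_divide_distrib sum_distrib_left)
  also have "\<dots> = 1" using geom_back[of beta t] beta_pow_lt[OF t] by simp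
  finally show ?thesis .
qed

lemma wt_le: "t \<ge> 1 \<Longrightarrow> i \<le> t \<Longrightarrow> wt t i \<le> (1 - beta) / (1 - beta ^ t)"
proof -
  assume t: "t \<ge> 1" and "i \<le> t"
  have "beta ^ (t - i) \<le> 1" using beta_pos beta_lt by (simp add: power_le_one)
  then have "(1 - beta) * beta ^ (t - i) \<le> (1 - beta)" using beta_lt by (simp add: mult_left_le)
  then show ?thesis unfolding wt_def using beta_pow_lt[OF t] by (simp add: divide_right_mono)
qed

lemma ema_eq: "t \<ge> 1 \<Longrightarrow> ema beta y t = (\<Sum>i=1..t. wt t i *\<^sub>R y i)"
  unfolding ema_def wt_def by (simp add: scaleR_sum_right)

lemma norm_le_quad: "\<theta> > 0 \<Longrightarrow> (n::real) \<le> \<theta> / 2 * n\<^sup>2 + 1 / (2 * \<theta>)"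
proof -
  assume th: "\<theta> > 0"
  have "0 \<le> (\<theta> * n - 1)\<^sup>2 / (2 * \<theta>)" using th by simp
  also have "(\<theta> * n - 1)\<^sup>2 / (2 * \<theta>) = \<theta> / 2 * n\<^sup>2 + 1 / (2 * \<theta>) - n"
    using th by (simp add: power2_eq_square field_simps)
  finally show ?thesis by simp
qed

lemma h_bound:
  assumes t: "t \<in> {1..T}" and s01: "\<forall>i\<in>{1..T}. s i \<omega> \<in> {0..1}"
    and th: "\<theta> > 0" and eta: "\<eta> > 0"
  shows "lam_norm gF lam (ema beta (\<lambda>i. x i \<omega> + s i \<omega> *\<^sub>R D i \<omega>) t)
    \<le> (1 - beta) / (1 - beta ^ t) * norm (Sg t \<omega>) + (\<theta> / 2 * (norm (Z t \<omega>))\<^sup>2 + 1 / (2 * \<theta>))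
      + lam * ((1 + 1 / \<eta>) * (\<Sum>i=1..t. wt t i * (norm (x i \<omega> - x t \<omega>))\<^sup>2)
               + (1 + \<eta>) * (\<Sum>i=1..t. wt t i * (norm (D i \<omega>))\<^sup>2))"
proof -
  have t1: "t \<ge> 1" using t by simp
  define m where "m = (\<Sum>i=1..t. wt t i *\<^sub>R Y i \<omega>)"
  have em: "ema beta (\<lambda>i. x i \<omega> + s i \<omega> *\<^sub>R D i \<omega>) t = m"
    unfolding m_def ema_eq[OF t1] Y_def ..
  have "lam_norm gF lam m \<le> norm (\<Sum>i=1..t. wt t i *\<^sub>R gF (Y i \<omega>)) + lam * (\<Sum>i=1..t. wt t i * (norm (Y i \<omega> - m))\<^sup>2)"
    by (rule lam_norm_le[OF _ _ wt_sum[OF t1] m_def]) (use wt_nonneg[OF t1] lam_pos gFm in auto)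
  also have "norm (\<Sum>i=1..t. wt t i *\<^sub>R gF (Y i \<omega>)) \<le> (1 - beta) / (1 - beta ^ t) * norm (Sg t \<omega>) + (\<theta> / 2 * (norm (Z t \<omega>))\<^sup>2 + 1 / (2 * \<theta>))"
  proof -
    have "(\<Sum>i=1..t. wt t i *\<^sub>R gF (Y i \<omega>)) = (\<Sum>i=1..t. wt t i *\<^sub>R g i \<omega>) - Z t \<omega>"
      unfolding Z_def xi_def by (simp add: scaleR_diff_right sum_subtractf)
    also have "(\<Sum>i=1..t. wt t i *\<^sub>R g i \<omega>) = ((1 - beta) / (1 - beta ^ t)) *\<^sub>R Sg t \<omega>"
      unfolding Sg_def wt_def by (simp add: scaleR_sum_right)
    finally have "norm (\<Sum>i=1..t. wt t i *\<^sub>R gF (Y i \<omega>)) \<le> norm (((1 - beta) / (1 - beta ^ t)) *\<^sub>R Sg t \<omega>) + norm (Z t \<omega>)"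
      by (simp only: norm_triangle_ineq4)
    also have "norm (((1 - beta) / (1 - beta ^ t)) *\<^sub>R Sg t \<omega>) = (1 - beta) / (1 - beta ^ t) * norm (Sg t \<omega>)"
      using beta_lt beta_pow_lt[OF t1] by simp
    also have "norm (Z t \<omega>) \<le> \<theta> / 2 * (norm (Z t \<omega>))\<^sup>2 + 1 / (2 * \<theta>)" by (rule norm_le_quad[OF th])
    finally show ?thesis by simp
  qed
  also have "(\<Sum>i=1..t. wt t i * (norm (Y i \<omega> - m))\<^sup>2) \<le> (\<Sum>i=1..t. wt t i * (norm (Y i \<omega> - x t \<omega>))\<^sup>2)"
    by (rule variance_le[OF _ wt_sum[OF t1] m_def]) simp
  also have "\<dots> \<le> (1 + 1 / \<eta>) * (\<Sum>i=1..t. wt t i * (norm (x i \<omega> - x t \<omega>))\<^sup>2)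
               + (1 + \<eta>) * (\<Sum>i=1..t. wt t i * (norm (D i \<omega>))\<^sup>2)"
  proof -
    have "(\<Sum>i=1..t. wt t i * (norm (Y i \<omega> - x t \<omega>))\<^sup>2) \<le> (\<Sum>i=1..t. wt t i * ((1 + 1 / \<eta>) * (norm (x i \<omega> - x t \<omega>))\<^sup>2 + (1 + \<eta>) * (norm (D i \<omega>))\<^sup>2))"
    proof (rule sum_mono)
      fix i assume i: "i \<in> {1..t}"
      have si: "s i \<omega> \<in> {0..1}" using s01 i t by auto
      have "Y i \<omega> - x t \<omega> = (x i \<omega> - x t \<omega>) + s i \<omega> *\<^sub>R D i \<omega>" unfolding Y_def by simp
      then have "(norm (Y i \<omega> - x t \<omega>))\<^sup>2 \<le> (1 + 1 / \<eta>) * (norm (x i \<omega> - x t \<omega>))\<^sup>2 + (1 + \<eta>) * (norm (s i \<omega> *\<^sub>R D i \<omega>))\<^sup>2"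
        using sq_split[OF eta, of "x i \<omega> - x t \<omega>" "s i \<omega> *\<^sub>R D i \<omega>"] by (simp only:)
      also have "(norm (s i \<omega> *\<^sub>R D i \<omega>))\<^sup>2 \<le> (norm (D i \<omega>))\<^sup>2"
      proof -
        have "norm (s i \<omega> *\<^sub>R D i \<omega>) \<le> norm (D i \<omega>)" using si by (simp add: mult_left_le_one_le)
        then show ?thesis by (intro power_mono) auto
      qed
      finally have "(norm (Y i \<omega> - x t \<omega>))\<^sup>2 \<le> (1 + 1 / \<eta>) * (norm (x i \<omega> - x t \<omega>))\<^sup>2 + (1 + \<eta>) * (norm (D i \<omega>))\<^sup>2"
        using eta by simp
      then show "wt t i * (norm (Y i \<omega> - x t \<omega>))\<^sup>2 \<le> wt t i * ((1 + 1 / \<eta>) * (norm (x i \<omega> - x t \<omega>))\<^sup>2 + (1 + \<eta>) * (norm (D i \<omega>))\<^sup>2)"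
        using wt_nonneg[OF t1] by (intro mult_left_mono) auto
    qed
    also have "\<dots> = (1 + 1 / \<eta>) * (\<Sum>i=1..t. wt t i * (norm (x i \<omega> - x t \<omega>))\<^sup>2)
               + (1 + \<eta>) * (\<Sum>i=1..t. wt t i * (norm (D i \<omega>))\<^sup>2)"
      by (simp add: sum.distrib sum_distrib_left algebra_simps)
    finally show ?thesis .
  qed
  finally show ?thesis unfolding em using lam_pos by (simp add: mult_left_mono)
qed

end

context setting
begin

definition "Sx = (\<integral>\<omega>. (\<Sum>t=1..T. (norm (x t \<omega> - x (t - 1) \<omega>))\<^sup>2) \<partial>M)"
definition "SD = (\<integral>\<omega>. (\<Sum>t=1..T. (norm (D t \<omega>))\<^sup>2) \<partial>M)"
definition "CC = Cx M x D T"

lemma SD_nonneg: "SD \<ge> 0" unfolding SD_def by (intro integral_nonneg_AE AE_I2 sum_nonneg) auto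

lemma CC_props: "CC \<ge> 0 \<and> Sx \<le> CC * SD"
proof -
  let ?P = "{C. C \<ge> 0 \<and> Sx \<le> C * SD}"
  have CC_eq: "CC = Inf ?P" unfolding CC_def Cx_def Sx_def SD_def ..
  obtain C0 where C0: "C0 \<in> ?P" using Cx_exists unfolding Sx_def SD_def by auto
  have ne: "?P \<noteq> {}" using C0 by auto
  have bdd: "bdd_below ?P" by (rule bdd_belowI[of _ 0]) auto
  have ge0: "CC \<ge> 0" unfolding CC_eq by (rule cInf_greatest[OF ne]) auto
  have "Sx \<le> CC * SD"
  proof (cases "SD = 0")
    case True then show ?thesis using C0 by simp
  next
    case False
    then have SDp: "SD > 0" using SD_nonneg by simp
    have "Sx / SD \<le> CC" unfolding CC_eq
    proof (rule cInf_greatest[OF ne])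
      fix C assume "C \<in> ?P"
      then show "Sx / SD \<le> C" using SDp by (simp add: divide_le_eq)
    qed
    then show ?thesis using SDp by (simp add: divide_le_eq)
  qed
  then show ?thesis using ge0 by simp
qed

definition "yv = 49 * (G + \<sigma>)\<^sup>2 / eps\<^sup>2 * sqrt CC"
definition "Dst = 1 / 4 * (1 / sqrt lam) * sqrt eps / (1 + yv)"

lemma yv_nonneg: "yv \<ge> 0" unfolding yv_def using CC_props by simp
lemma Dst_pos: "Dst > 0" unfolding Dst_def using yv_nonneg lam_pos eps_pos by simp
lemma mu_eq: "mu = 2 * sqrt lam * sqrt eps * (1 + yv)" unfolding yv_def CC_def using mu_def by simp
lemma mu_nonneg: "mu \<ge> 0" unfolding mu_eq using yv_nonneg lam_pos eps_pos by simp

definition "u t \<omega> = - (Dst / norm (Sg t \<omega>)) *\<^sub>R Sg t \<omega>"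

lemma u_norm: "norm (u t \<omega>) \<le> Dst"
  unfolding u_def using Dst_pos by (cases "Sg t \<omega> = 0") auto

lemma u_inner: "Sg t \<omega> \<bullet> u t \<omega> = - Dst * norm (Sg t \<omega>)"
  unfolding u_def by (cases "Sg t \<omega> = 0") (auto simp: power2_norm_eq_inner[symmetric] power2_eq_square)

lemma regret_t:
  "disc_regret beta mu (\<lambda>i. g i \<omega>) (\<lambda>i. D i \<omega>) t (u t \<omega>)
    = (\<Sum>i=1..t. beta ^ (t - i) * loss mu (g i \<omega>) (D i \<omega>)) + Dst * norm (Sg t \<omega>)
      - mu / 2 * (norm (u t \<omega>))\<^sup>2 * (\<Sum>i=1..t. beta ^ (t - i) * 1)"
proof -
  have "disc_regret beta mu (\<lambda>i. g i \<omega>) (\<lambda>i. D i \<omega>) t (u t \<omega>)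
     = (\<Sum>i=1..t. beta ^ (t - i) * loss mu (g i \<omega>) (D i \<omega>)) - (\<Sum>i=1..t. beta ^ (t - i) * (g i \<omega> \<bullet> u t \<omega>))
       - mu / 2 * (norm (u t \<omega>))\<^sup>2 * (\<Sum>i=1..t. beta ^ (t - i) * 1)"
    unfolding disc_regret_def loss_def
    by (simp add: sum_subtractf sum.distrib sum_distrib_left sum_distrib_right right_diff_distrib distrib_left algebra_simps)
  also have "(\<Sum>i=1..t. beta ^ (t - i) * (g i \<omega> \<bullet> u t \<omega>)) = Sg t \<omega> \<bullet> u t \<omega>"
    unfolding Sg_def by (simp add: inner_sum_left)
  also have "\<dots> = - Dst * norm (Sg t \<omega>)" by (rule u_inner)
  finally show ?thesis by simp
qed

lemma regret_point:
  "Dst * (\<Sum>t=1..T. ctf beta T t * norm (Sg t \<omega>))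
    \<le> (\<Sum>t=1..T. ctf beta T t * disc_regret beta mu (\<lambda>i. g i \<omega>) (\<lambda>i. D i \<omega>) t (u t \<omega>))
       - (\<Sum>i=1..T. g i \<omega> \<bullet> D i \<omega>) - mu / 2 * (\<Sum>i=1..T. (norm (D i \<omega>))\<^sup>2) + mu / 2 * Dst\<^sup>2 * real T"
proof -
  define B where "B t = (\<Sum>i=1..t. beta ^ (t - i) * 1)" for t
  have B0: "B t \<ge> 0" for t unfolding B_def using beta_pos by (intro sum_nonneg) auto
  have "(\<Sum>t=1..T. ctf beta T t * disc_regret beta mu (\<lambda>i. g i \<omega>) (\<lambda>i. D i \<omega>) t (u t \<omega>))
     = (\<Sum>t=1..T. ctf beta T t * (\<Sum>i=1..t. beta ^ (t - i) * loss mu (g i \<omega>) (D i \<omega>)))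
       + Dst * (\<Sum>t=1..T. ctf beta T t * norm (Sg t \<omega>))
       - mu / 2 * (\<Sum>t=1..T. ctf beta T t * ((norm (u t \<omega>))\<^sup>2 * B t))"
    unfolding regret_t B_def
    by (simp add: sum.distrib sum_subtractf sum_distrib_left algebra_simps)
  also have "(\<Sum>t=1..T. ctf beta T t * (\<Sum>i=1..t. beta ^ (t - i) * loss mu (g i \<omega>) (D i \<omega>)))
      = (\<Sum>i=1..T. loss mu (g i \<omega>) (D i \<omega>))" by (rule swap_id)
  also have "(\<Sum>i=1..T. loss mu (g i \<omega>) (D i \<omega>)) = (\<Sum>i=1..T. g i \<omega> \<bullet> D i \<omega>) + mu / 2 * (\<Sum>i=1..T. (norm (D i \<omega>))\<^sup>2)"
    unfolding loss_def by (simp add: sum.distrib sum_distrib_left)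
  finally have eq: "(\<Sum>t=1..T. ctf beta T t * disc_regret beta mu (\<lambda>i. g i \<omega>) (\<lambda>i. D i \<omega>) t (u t \<omega>))
     = (\<Sum>i=1..T. g i \<omega> \<bullet> D i \<omega>) + mu / 2 * (\<Sum>i=1..T. (norm (D i \<omega>))\<^sup>2)
       + Dst * (\<Sum>t=1..T. ctf beta T t * norm (Sg t \<omega>))
       - mu / 2 * (\<Sum>t=1..T. ctf beta T t * ((norm (u t \<omega>))\<^sup>2 * B t))" .
  have "(\<Sum>t=1..T. ctf beta T t * ((norm (u t \<omega>))\<^sup>2 * B t)) \<le> (\<Sum>t=1..T. ctf beta T t * (Dst\<^sup>2 * B t))"
  proof (rule sum_mono)
    fix t
    have "(norm (u t \<omega>))\<^sup>2 \<le> Dst\<^sup>2" using u_norm[of t \<omega>] by (intro power_mono) auto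
    then show "ctf beta T t * ((norm (u t \<omega>))\<^sup>2 * B t) \<le> ctf beta T t * (Dst\<^sup>2 * B t)"
      using B0[of t] beta_lt by (intro mult_left_mono mult_right_mono) (auto simp: ctf_nonneg)
  qed
  also have "\<dots> = Dst\<^sup>2 * (\<Sum>t=1..T. ctf beta T t * B t)"
    unfolding sum_distrib_left by (rule sum.cong) (simp_all add: mult_ac)
  also have "(\<Sum>t=1..T. ctf beta T t * B t) = real T"
    unfolding B_def using swap_id[of beta T "\<lambda>_. 1"] by simp
  finally have "(\<Sum>t=1..T. ctf beta T t * ((norm (u t \<omega>))\<^sup>2 * B t)) \<le> Dst\<^sup>2 * real T" .
  then have "mu / 2 * (\<Sum>t=1..T. ctf beta T t * ((norm (u t \<omega>))\<^sup>2 * B t)) \<le> mu / 2 * (Dst\<^sup>2 * real T)"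
    using mu_nonneg by (intro mult_left_mono) auto
  then show ?thesis unfolding eq by simp
qed

end

context setting
begin

lemma SQ_Sg: "t \<le> T \<Longrightarrow> SQ (Sg t)"
  unfolding Sg_def[abs_def]
  by (rule SQ_sum) (auto intro!: SQ_scale SQ_g)

lemma SQ_Z: "t \<le> T \<Longrightarrow> SQ (Z t)"
  unfolding Z_def[abs_def]
  by (rule SQ_sum) (auto intro!: SQ_scale SQ_xi)

lemma SQ_x: "t \<le> T \<Longrightarrow> SQ (x t)"
proof -
  assume tT: "t \<le> T"
  have eq: "x t \<omega> = x0 + (\<Sum>r=Suc 0..t. x r \<omega> - x (r - 1) \<omega>)" for \<omega>
    using telescope[of 0 t "\<lambda>r. x r \<omega>"] x_0[of \<omega>] by (simp add: algebra_simps)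
  have "SQ (\<lambda>\<omega>. x0 + (\<Sum>r=Suc 0..t. x r \<omega> - x (r - 1) \<omega>))"
  proof (rule SQ_add[OF SQ_const SQ_sum])
    fix r assume "r \<in> {Suc 0..t}"
    then have "r \<in> {1..T}" using tT by simp
    then show "SQ (\<lambda>\<omega>. x r \<omega> - x (r - 1) \<omega>)" by (rule SQ_dx)
  qed simp
  then show ?thesis using eq by (simp add: eq[abs_def])
qed

lemma SQ_xx: "i \<le> T \<Longrightarrow> t \<le> T \<Longrightarrow> SQ (\<lambda>\<omega>. x i \<omega> - x t \<omega>)"
  by (rule SQ_diff[OF SQ_x SQ_x])

definition "th = 1 / (a * kap)"
definition "eta = 1 + 2 * yv"
lemma th_pos: "th > 0" unfolding th_def using a_pos kap_pos by simp
lemma eta_pos: "eta > 0" unfolding eta_def using yv_nonneg by simp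

definition "h t \<omega> = (1 - beta) / (1 - beta ^ t) * norm (Sg t \<omega>) + (th / 2 * (norm (Z t \<omega>))\<^sup>2 + 1 / (2 * th))
      + lam * ((1 + 1 / eta) * (\<Sum>i=1..t. wt t i * (norm (x i \<omega> - x t \<omega>))\<^sup>2)
               + (1 + eta) * (\<Sum>i=1..t. wt t i * (norm (D i \<omega>))\<^sup>2))"

lemma h_int: "t \<in> {1..T} \<Longrightarrow> integrable M (h t)"
proof -
  assume t: "t \<in> {1..T}"
  have i1: "integrable M (\<lambda>\<omega>. norm (Sg t \<omega>))" using SQ_norm_int[OF SQ_Sg] t by simp
  have i2: "integrable M (\<lambda>\<omega>. (norm (Z t \<omega>))\<^sup>2)" using SQ_int[OF SQ_Z] t by simp
  have i3: "integrable M (\<lambda>\<omega>. (norm (x i \<omega> - x t \<omega>))\<^sup>2)" if "i \<in> {1..t}" for i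
    using SQ_int[OF SQ_xx] that t by simp
  have i4: "integrable M (\<lambda>\<omega>. (norm (D i \<omega>))\<^sup>2)" if "i \<in> {1..t}" for i
    using D_sq that t by simp
  show ?thesis unfolding h_def[abs_def]
    by (intro Bochner_Integration.integrable_add integrable_mult_right Bochner_Integration.integrable_sum
          integrable_const i1 i2 i3 i4)
qed

lemma h_nonneg: "t \<in> {1..T} \<Longrightarrow> h t \<omega> \<ge> 0"
proof -
  assume t: "t \<in> {1..T}"
  have "(1 - beta) / (1 - beta ^ t) \<ge> 0" using beta_lt beta_pow_lt[of t] t by simp
  moreover have "(\<Sum>i=1..t. wt t i * (norm (x i \<omega> - x t \<omega>))\<^sup>2) \<ge> 0"
    using wt_nonneg[of t] t by (intro sum_nonneg) auto
  moreover have "(\<Sum>i=1..t. wt t i * (norm (D i \<omega>))\<^sup>2) \<ge> 0"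
    using wt_nonneg[of t] t by (intro sum_nonneg) auto
  ultimately show ?thesis unfolding h_def using th_pos eta_pos lam_pos
    by (intro add_nonneg_nonneg mult_nonneg_nonneg) auto
qed

lemma lhs_t:
  assumes t: "t \<in> {1..T}"
  shows "enn2real (\<integral>\<^sup>+\<omega>. ennreal (lam_norm gF lam (ema beta (\<lambda>i. x i \<omega> + s i \<omega> *\<^sub>R D i \<omega>) t)) \<partial>M)
         \<le> (\<integral>\<omega>. h t \<omega> \<partial>M)"
proof -
  have hm: "h t \<in> borel_measurable M" using h_int[OF t] by auto
  have "(\<integral>\<^sup>+\<omega>. ennreal (lam_norm gF lam (ema beta (\<lambda>i. x i \<omega> + s i \<omega> *\<^sub>R D i \<omega>) t)) \<partial>M)
      \<le> (\<integral>\<^sup>+\<omega>. ennreal (h t \<omega>) \<partial>M)"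
  proof (rule nn_integral_mono_AE)
    show "AE \<omega> in M. ennreal (lam_norm gF lam (ema beta (\<lambda>i. x i \<omega> + s i \<omega> *\<^sub>R D i \<omega>) t)) \<le> ennreal (h t \<omega>)"
      using AE_s01
    proof eventually_elim
      case (elim \<omega>)
      show ?case using h_bound[OF t elim th_pos eta_pos] unfolding h_def by (rule ennreal_leI)
    qed
  qed
  also have "(\<integral>\<^sup>+\<omega>. ennreal (h t \<omega>) \<partial>M) = ennreal (\<integral>\<omega>. h t \<omega> \<partial>M)"
    by (rule nn_integral_eq_integral[OF h_int[OF t]]) (use h_nonneg[OF t] in auto)
  finally have le: "(\<integral>\<^sup>+\<omega>. ennreal (lam_norm gF lam (ema beta (\<lambda>i. x i \<omega> + s i \<omega> *\<^sub>R D i \<omega>) t)) \<partial>M)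
      \<le> ennreal (\<integral>\<omega>. h t \<omega> \<partial>M)" .
  have "enn2real (\<integral>\<^sup>+\<omega>. ennreal (lam_norm gF lam (ema beta (\<lambda>i. x i \<omega> + s i \<omega> *\<^sub>R D i \<omega>) t)) \<partial>M)
     \<le> enn2real (ennreal (\<integral>\<omega>. h t \<omega> \<partial>M))"
    by (rule enn2real_mono[OF le]) simp
  also have "\<dots> = (\<integral>\<omega>. h t \<omega> \<partial>M)"
    using h_nonneg[OF t] by (simp add: integral_nonneg_AE)
  finally show ?thesis .
qed

lemma F_lip: "\<bar>F z - F w\<bar> \<le> G * norm (z - w)"
proof -
  have hi: "((\<lambda>r. gF (w + r *\<^sub>R (z - w)) \<bullet> (z - w)) has_integral (F z - F w)) (cbox 0 1)"
    using F_ftc by simp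
  have B0: "0 \<le> G * norm (z - w)" using G0 by simp
  have bnd: "norm (gF (w + r *\<^sub>R (z - w)) \<bullet> (z - w)) \<le> G * norm (z - w)" for r :: real
  proof -
    have "\<bar>gF (w + r *\<^sub>R (z - w)) \<bullet> (z - w)\<bar> \<le> norm (gF (w + r *\<^sub>R (z - w))) * norm (z - w)"
      by (rule Cauchy_Schwarz_ineq2)
    also have "\<dots> \<le> G * norm (z - w)" by (rule mult_right_mono[OF G_bound]) simp
    finally show "norm (gF (w + r *\<^sub>R (z - w)) \<bullet> (z - w)) \<le> G * norm (z - w)" by simp
  qed
  show ?thesis using has_integral_bound[OF B0 hi bnd] by simp
qed

lemma F_int: "t \<in> {1..T} \<Longrightarrow> integrable M (\<lambda>\<omega>. F (x t \<omega>) - F (x t \<omega> + D t \<omega>))"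
proof -
  assume t: "t \<in> {1..T}"
  have [measurable]: "x t \<in> borel_measurable M" "D t \<in> borel_measurable M" using xm Dm t by auto
  show ?thesis
  proof (rule Bochner_Integration.integrable_bound[where f="\<lambda>\<omega>. G * norm (D t \<omega>)"])
    show "integrable M (\<lambda>\<omega>. G * norm (D t \<omega>))" using SQ_norm_int[OF SQ_D[OF t]] by simp
    show "(\<lambda>\<omega>. F (x t \<omega>) - F (x t \<omega> + D t \<omega>)) \<in> borel_measurable M" by measurable
    show "AE \<omega> in M. norm (F (x t \<omega>) - F (x t \<omega> + D t \<omega>)) \<le> norm (G * norm (D t \<omega>))"
    proof (rule AE_I2)
      fix \<omega>
      have "\<bar>F (x t \<omega>) - F (x t \<omega> + D t \<omega>)\<bar> \<le> G * norm (x t \<omega> - (x t \<omega> + D t \<omega>))"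
        by (rule F_lip)
      then show "norm (F (x t \<omega>) - F (x t \<omega> + D t \<omega>)) \<le> norm (G * norm (D t \<omega>))" using G0 by simp
    qed
  qed
qed

end

context setting
begin

abbreviation "ct t \<equiv> ctf beta T t"
abbreviation "tau t \<equiv> tau_prob beta T t"

lemma tau_eq: "t \<in> {1..T} \<Longrightarrow> tau t = ct t * (1 - beta ^ t) / ((1 - beta) * real T)"
  unfolding tau_prob_def ctf_def using beta_lt by auto

lemma tau_nonneg: "t \<in> {1..T} \<Longrightarrow> tau t \<ge> 0"
  unfolding tau_eq using beta_lt beta_pow_lt[of t] ctf_nonneg[of beta T t] by (intro divide_nonneg_pos mult_nonneg_nonneg) auto

lemma nz: "t \<in> {1..T} \<Longrightarrow> 1 - beta \<noteq> 0 \<and> 1 - beta ^ t \<noteq> 0 \<and> real T \<noteq> 0"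
  using beta_lt beta_pow_lt[of t] T_pos by auto

lemma frac1: "(A::real) \<noteq> 0 \<Longrightarrow> B \<noteq> 0 \<Longrightarrow> R \<noteq> 0 \<Longrightarrow> (c * A / (B * R)) * (B / A) = c * (1 / R)"
  by (simp add: field_simps)
lemma frac2: "(A::real) \<noteq> 0 \<Longrightarrow> B \<noteq> 0 \<Longrightarrow> R \<noteq> 0 \<Longrightarrow> (c * A / (B * R)) * (B * q / A) = c * q * (1 / R)"
  by (simp add: field_simps)
lemma frac3: "(B::real) * S = A \<Longrightarrow> B \<noteq> 0 \<Longrightarrow> R \<noteq> 0 \<Longrightarrow> c * A / (B * R) = c * S * (1 / R)"
  by (simp add: field_simps)

lemma tau_a: "t \<in> {1..T} \<Longrightarrow> tau t * ((1 - beta) / (1 - beta ^ t)) = ct t * (1 / real T)"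
  unfolding tau_eq using nz[of t] by (intro frac1) auto

lemma tau_w: "t \<in> {1..T} \<Longrightarrow> tau t * wt t i = ct t * beta ^ (t - i) * (1 / real T)"
  unfolding tau_eq wt_def using nz[of t] by (intro frac2) auto

lemma tau_sum: "(\<Sum>t=1..T. tau t) = 1"
proof -
  have "(\<Sum>t=1..T. tau t) = (\<Sum>t=1..T. ct t * (\<Sum>i=1..t. beta ^ (t - i) * 1)) / real T"
  proof -
    have "(\<Sum>t=1..T. tau t) = (\<Sum>t=1..T. ct t * (\<Sum>i=1..t. beta ^ (t - i) * 1) / real T)"
    proof (rule sum.cong[OF refl])
      fix t assume t: "t \<in> {1..T}"
      have "(1 - beta) * (\<Sum>i=1..t. beta ^ (t - i)) = 1 - beta ^ t" by (rule geom_back)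
      then show "tau t = ct t * (\<Sum>i=1..t. beta ^ (t - i) * 1) / real T"
        unfolding tau_eq[OF t] using nz[OF t] frac3[OF geom_back[of beta t], of "real T" "ct t"] by simp
    qed
    then show ?thesis by (simp add: sum_divide_distrib)
  qed
  also have "\<dots> = 1" using swap_id[of beta T "\<lambda>_. 1"] T_pos by simp
  finally show ?thesis .
qed

definition "P1 \<omega> = (\<Sum>t=1..T. ct t * disc_regret beta mu (\<lambda>i. g i \<omega>) (\<lambda>i. D i \<omega>) t (u t \<omega>))"
definition "P2 \<omega> = (\<Sum>i=1..T. g i \<omega> \<bullet> D i \<omega>)"
definition "P3 \<omega> = (\<Sum>i=1..T. (norm (D i \<omega>))\<^sup>2)"
definition "P4 \<omega> = (\<Sum>t=1..T. tau t * (norm (Z t \<omega>))\<^sup>2)"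
definition "P5 \<omega> = (\<Sum>r=1..T. (norm (x r \<omega> - x (r - 1) \<omega>))\<^sup>2)"

definition "Hf \<omega> = 1 / (real T * Dst) * (P1 \<omega> - P2 \<omega> - mu / 2 * P3 \<omega> + mu / 2 * Dst\<^sup>2 * real T)
   + th / 2 * P4 \<omega> + 1 / (2 * th) + lam / real T * ((1 + 1 / eta) * (3 / (1 - beta)\<^sup>2) * P5 \<omega> + (1 + eta) * P3 \<omega>)"

lemma point_bound: "(\<Sum>t=1..T. tau t * h t \<omega>) \<le> Hf \<omega>"
proof -
  define c0 where "c0 = 1 / real T"
  define ie where "ie = 1 / eta"
  define k2 where "k2 = 1 / (2 * th)"
  define fa where "fa t = (1 - beta) / (1 - beta ^ t)" for t
  define nS where "nS t = norm (Sg t \<omega>)" for t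
  define nZ where "nZ t = (norm (Z t \<omega>))\<^sup>2" for t
  define Xn where "Xn t i = (norm (x i \<omega> - x t \<omega>))\<^sup>2" for t i
  define Dn where "Dn i = (norm (D i \<omega>))\<^sup>2" for i
  define SX where "SX t = (\<Sum>i=1..t. beta ^ (t - i) * Xn t i)" for t
  define SDt where "SDt t = (\<Sum>i=1..t. beta ^ (t - i) * Dn i)" for t
  define Q where "Q = (\<Sum>t=1..T. ct t * SX t)"
  have hh: "h t \<omega> = fa t * nS t + (th / 2 * nZ t + k2) + lam * ((1 + ie) * (\<Sum>i=1..t. wt t i * Xn t i) + (1 + eta) * (\<Sum>i=1..t. wt t i * Dn i))" for t
    unfolding h_def fa_def nS_def nZ_def k2_def ie_def Xn_def Dn_def ..
  have per: "tau t * h t \<omega> = ct t * c0 * nS t + th / 2 * (tau t * nZ t) + tau t * k2 + lam * ((1 + ie) * (ct t * c0 * SX t) + (1 + eta) * (ct t * c0 * SDt t))"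
    if t: "t \<in> {1..T}" for t
  proof -
    have p1: "tau t * fa t = ct t * c0" unfolding fa_def c0_def by (rule tau_a[OF t])
    have e1: "tau t * (\<Sum>i=1..t. wt t i * f i) = ct t * c0 * (\<Sum>i=1..t. beta ^ (t - i) * f i)" for f
    proof -
      have "tau t * (\<Sum>i=1..t. wt t i * f i) = (\<Sum>i=1..t. (tau t * wt t i) * f i)"
        by (simp add: sum_distrib_left mult.assoc)
      also have "\<dots> = (\<Sum>i=1..t. (ct t * c0) * (beta ^ (t - i) * f i))"
        unfolding tau_w[OF t] c0_def by (simp add: mult_ac)
      finally show ?thesis by (simp add: sum_distrib_left)
    qed
    have "tau t * h t \<omega> = (tau t * fa t) * nS t + th / 2 * (tau t * nZ t) + tau t * k2 + lam * ((1 + ie) * (tau t * (\<Sum>i=1..t. wt t i * Xn t i)) + (1 + eta) * (tau t * (\<Sum>i=1..t. wt t i * Dn i)))"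
      unfolding hh by (simp add: algebra_simps)
    also have "\<dots> = ct t * c0 * nS t + th / 2 * (tau t * nZ t) + tau t * k2 + lam * ((1 + ie) * (ct t * c0 * SX t) + (1 + eta) * (ct t * c0 * SDt t))"
      unfolding p1 e1 SX_def SDt_def ..
    finally show ?thesis .
  qed
  have "(\<Sum>t=1..T. tau t * h t \<omega>) = (\<Sum>t=1..T. ct t * c0 * nS t + th / 2 * (tau t * nZ t) + tau t * k2 + lam * ((1 + ie) * (ct t * c0 * SX t) + (1 + eta) * (ct t * c0 * SDt t)))"
    by (rule sum.cong[OF refl]) (rule per)
  also have "\<dots> = c0 * (\<Sum>t=1..T. ct t * nS t) + th / 2 * (\<Sum>t=1..T. tau t * nZ t) + (\<Sum>t=1..T. tau t) * k2
      + lam * ((1 + ie) * (c0 * Q) + (1 + eta) * (c0 * (\<Sum>t=1..T. ct t * SDt t)))"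
    unfolding Q_def by (simp add: sum.distrib sum_distrib_left sum_distrib_right distrib_left mult_ac)
  also have "(\<Sum>t=1..T. ct t * SDt t) = P3 \<omega>"
    unfolding P3_def SDt_def Dn_def by (rule swap_id)
  also have "(\<Sum>t=1..T. tau t) = 1" by (rule tau_sum)
  also have "(\<Sum>t=1..T. tau t * nZ t) = P4 \<omega>" unfolding P4_def nZ_def ..
  finally have eq: "(\<Sum>t=1..T. tau t * h t \<omega>) = c0 * (\<Sum>t=1..T. ct t * nS t) + th / 2 * P4 \<omega> + k2
      + lam * ((1 + ie) * (c0 * Q) + (1 + eta) * (c0 * P3 \<omega>))" by simp
  have Qb: "Q \<le> 3 / (1 - beta)\<^sup>2 * P5 \<omega>"
    unfolding Q_def P5_def SX_def Xn_def using comb[of beta T "\<lambda>i. x i \<omega>"] beta_pos beta_lt by simp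
  have s1: "c0 * (\<Sum>t=1..T. ct t * nS t) \<le> 1 / (real T * Dst) * (P1 \<omega> - P2 \<omega> - mu / 2 * P3 \<omega> + mu / 2 * Dst\<^sup>2 * real T)"
  proof -
    have "Dst * (\<Sum>t=1..T. ct t * nS t) \<le> P1 \<omega> - P2 \<omega> - mu / 2 * P3 \<omega> + mu / 2 * Dst\<^sup>2 * real T"
      using regret_point[of \<omega>] unfolding P1_def P2_def P3_def nS_def by simp
    then show ?thesis unfolding c0_def using Dst_pos T_pos by (simp add: field_simps)
  qed
  have s2: "lam * ((1 + ie) * (c0 * Q) + (1 + eta) * (c0 * P3 \<omega>)) \<le> lam * ((1 + ie) * (c0 * (3 / (1 - beta)\<^sup>2 * P5 \<omega>)) + (1 + eta) * (c0 * P3 \<omega>))"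
    using Qb eta_pos lam_pos T_pos unfolding ie_def c0_def by (intro mult_left_mono add_right_mono) auto
  have s3: "lam * ((1 + ie) * (c0 * (3 / (1 - beta)\<^sup>2 * P5 \<omega>)) + (1 + eta) * (c0 * P3 \<omega>))
     = lam / real T * ((1 + 1 / eta) * (3 / (1 - beta)\<^sup>2) * P5 \<omega> + (1 + eta) * P3 \<omega>)"
  proof -
    have "lam * ((1 + ie) * (c0 * (3 / (1 - beta)\<^sup>2 * P5 \<omega>)) + (1 + eta) * (c0 * P3 \<omega>))
       = (lam * c0) * ((1 + ie) * (3 / (1 - beta)\<^sup>2) * P5 \<omega> + (1 + eta) * P3 \<omega>)"
      by (simp add: algebra_simps)
    also have "lam * c0 = lam / real T" unfolding c0_def by simp
    finally show ?thesis unfolding ie_def .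
  qed
  show ?thesis unfolding eq Hf_def k2_def[symmetric] using s1 s2 s3 by linarith
qed

end

context setting
begin

lemma E_cross:
  assumes i: "i \<in> {1..T}" and j: "j \<in> {1..T}"
  shows "(\<integral>\<omega>. xi i \<omega> \<bullet> xi j \<omega> \<partial>M) = (if i = j then (\<integral>\<omega>. (norm (xi i \<omega>))\<^sup>2 \<partial>M) else 0)"
proof (cases "i = j")
  case True then show ?thesis by (simp add: power2_norm_eq_inner)
next
  case False
  show ?thesis
  proof (cases "i < j")
    case True then show ?thesis using E_xi_orth[of i j] i j by auto
  next
    case False
    then have "j < i" using \<open>i \<noteq> j\<close> by simp
    then show ?thesis using E_xi_orth[of j i] i j \<open>i \<noteq> j\<close> by (auto simp: inner_commute)
  qed
qed

lemma E_Z: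
  assumes t: "t \<in> {1..T}"
  shows "(\<integral>\<omega>. (norm (Z t \<omega>))\<^sup>2 \<partial>M) \<le> \<sigma>\<^sup>2 * ((1 - beta) / (1 - beta ^ t))"
proof -
  have t1: "t \<ge> 1" using t by simp
  have sub: "i \<in> {1..t} \<Longrightarrow> i \<in> {1..T}" for i using t by auto
  have ex: "(norm (Z t \<omega>))\<^sup>2 = (\<Sum>i=1..t. \<Sum>j=1..t. wt t i * wt t j * (xi j \<omega> \<bullet> xi i \<omega>))" for \<omega>
    unfolding Z_def power2_norm_eq_inner
    by (simp add: inner_sum_left inner_sum_right sum_distrib_left mult.assoc)
  have ii: "integrable M (\<lambda>\<omega>. xi j \<omega> \<bullet> xi i \<omega>)" if "i \<in> {1..t}" "j \<in> {1..t}" for i j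
    by (rule SQ_inner_int[OF SQ_xi SQ_xi]) (use that sub in auto)
  have "(\<integral>\<omega>. (norm (Z t \<omega>))\<^sup>2 \<partial>M) = (\<Sum>i=1..t. \<Sum>j=1..t. wt t i * wt t j * (\<integral>\<omega>. xi j \<omega> \<bullet> xi i \<omega> \<partial>M))"
    unfolding ex
    by (subst Bochner_Integration.integral_sum, use ii in \<open>auto intro!: Bochner_Integration.integrable_sum\<close>)+
  also have "\<dots> = (\<Sum>i=1..t. (wt t i)\<^sup>2 * (\<integral>\<omega>. (norm (xi i \<omega>))\<^sup>2 \<partial>M))"
  proof (rule sum.cong[OF refl])
    fix i assume i: "i \<in> {1..t}"
    have "(\<Sum>j=1..t. wt t i * wt t j * (\<integral>\<omega>. xi j \<omega> \<bullet> xi i \<omega> \<partial>M))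
        = (\<Sum>j=1..t. (if j = i then wt t i * wt t j * (\<integral>\<omega>. (norm (xi i \<omega>))\<^sup>2 \<partial>M) else 0))"
      by (rule sum.cong[OF refl]) (use E_cross sub i in auto)
    also have "\<dots> = (wt t i)\<^sup>2 * (\<integral>\<omega>. (norm (xi i \<omega>))\<^sup>2 \<partial>M)"
      using i by (simp add: power2_eq_square)
    finally show "(\<Sum>j=1..t. wt t i * wt t j * (\<integral>\<omega>. xi j \<omega> \<bullet> xi i \<omega> \<partial>M)) = (wt t i)\<^sup>2 * (\<integral>\<omega>. (norm (xi i \<omega>))\<^sup>2 \<partial>M)" .
  qed
  also have "\<dots> \<le> (\<Sum>i=1..t. wt t i * ((1 - beta) / (1 - beta ^ t)) * \<sigma>\<^sup>2)"
  proof (rule sum_mono)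
    fix i assume i: "i \<in> {1..t}"
    have w0: "wt t i \<ge> 0" by (rule wt_nonneg[OF t1])
    have "(wt t i)\<^sup>2 \<le> wt t i * ((1 - beta) / (1 - beta ^ t))"
      unfolding power2_eq_square using wt_le[OF t1, of i] i w0 by (intro mult_left_mono) auto
    moreover have "(\<integral>\<omega>. (norm (xi i \<omega>))\<^sup>2 \<partial>M) \<le> \<sigma>\<^sup>2" using E_xi_sq sub i by auto
    moreover have "(\<integral>\<omega>. (norm (xi i \<omega>))\<^sup>2 \<partial>M) \<ge> 0" by (intro integral_nonneg_AE) auto
    moreover have "wt t i * ((1 - beta) / (1 - beta ^ t)) \<ge> 0"
      using w0 beta_lt beta_pow_lt[OF t1] by simp
    ultimately show "(wt t i)\<^sup>2 * (\<integral>\<omega>. (norm (xi i \<omega>))\<^sup>2 \<partial>M) \<le> wt t i * ((1 - beta) / (1 - beta ^ t)) * \<sigma>\<^sup>2"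
      by (intro mult_mono) auto
  qed
  also have "\<dots> = (\<Sum>i=1..t. wt t i) * ((1 - beta) / (1 - beta ^ t)) * \<sigma>\<^sup>2"
    by (simp only: sum_distrib_right)
  also have "\<dots> = \<sigma>\<^sup>2 * ((1 - beta) / (1 - beta ^ t))" using wt_sum[OF t1] by simp
  finally show ?thesis .
qed

definition "Rb = 2 * Dst * a / (beta * kap) + mu / 2 * Dst\<^sup>2"

lemma Sgm: "t \<le> T \<Longrightarrow> Sg t \<in> borel_measurable M" using SQ_Sg by (simp add: SQ_def)
lemma um: "t \<le> T \<Longrightarrow> u t \<in> borel_measurable M"
proof -
  assume "t \<le> T"
  then have [measurable]: "Sg t \<in> borel_measurable M" by (rule Sgm)
  show ?thesis unfolding u_def[abs_def] by measurable
qed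

lemma R_int:
  assumes t: "t \<in> {1..T}"
  shows "integrable M (\<lambda>\<omega>. disc_regret beta mu (\<lambda>i. g i \<omega>) (\<lambda>i. D i \<omega>) t (u t \<omega>))"
proof -
  have sub: "i \<in> {1..t} \<Longrightarrow> i \<in> {1..T}" for i using t by auto
  have SQu: "SQ (u t)" by (rule SQ_bounded[OF um u_norm]) (use t in auto)
  have li: "integrable M (\<lambda>\<omega>. loss mu (g i \<omega>) (D i \<omega>))" if "i \<in> {1..t}" for i
    unfolding loss_def using SQ_inner_int[OF SQ_g SQ_D, of i i] D_sq[of i] sub[OF that] by auto
  show ?thesis unfolding regret_t
    by (intro Bochner_Integration.integrable_diff Bochner_Integration.integrable_add
        Bochner_Integration.integrable_sum integrable_mult_right integrable_mult_left li
        SQ_norm_int[OF SQ_Sg] SQ_int[OF SQu]) (use t in auto)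
qed

lemma E_R:
  assumes t: "t \<in> {1..T}"
  shows "(\<integral>\<omega>. disc_regret beta mu (\<lambda>i. g i \<omega>) (\<lambda>i. D i \<omega>) t (u t \<omega>) \<partial>M) \<le> Rb"
proof -
  have umt[measurable]: "u t \<in> borel_measurable M" using um t by simp
  have "(\<integral>\<omega>. disc_regret beta mu (\<lambda>i. g i \<omega>) (\<lambda>i. D i \<omega>) t (u t \<omega>) \<partial>M)
      \<le> (\<integral>\<omega>. 2 * norm (u t \<omega>) * (G + \<sigma>) / (beta * sqrt (1 - beta)) + mu / 2 * (norm (u t \<omega>))\<^sup>2 \<partial>M)"
    by (rule regret[OF t umt]) (use u_norm in blast)
  also have "\<dots> \<le> (\<integral>\<omega>. Rb \<partial>M)"
  proof (rule integral_mono)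
    have b: "\<bar>2 * norm (u t \<omega>) * (G + \<sigma>) / (beta * sqrt (1 - beta)) + mu / 2 * (norm (u t \<omega>))\<^sup>2\<bar>
        \<le> 2 * Dst * (G + \<sigma>) / (beta * sqrt (1 - beta)) + mu / 2 * Dst\<^sup>2" for \<omega>
    proof -
      have n: "norm (u t \<omega>) \<le> Dst" by (rule u_norm)
      have d: "beta * sqrt (1 - beta) > 0" using beta_pos beta_lt by simp
      have "2 * norm (u t \<omega>) * (G + \<sigma>) / (beta * sqrt (1 - beta)) \<le> 2 * Dst * (G + \<sigma>) / (beta * sqrt (1 - beta))"
        using n a_pos d unfolding a_def by (intro divide_right_mono mult_right_mono) auto
      moreover have "mu / 2 * (norm (u t \<omega>))\<^sup>2 \<le> mu / 2 * Dst\<^sup>2"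
        using n mu_nonneg by (intro mult_left_mono power_mono) auto
      moreover have "0 \<le> 2 * norm (u t \<omega>) * (G + \<sigma>) / (beta * sqrt (1 - beta)) + mu / 2 * (norm (u t \<omega>))\<^sup>2"
        using a_pos d mu_nonneg G0 sigma_nonneg unfolding a_def by (intro add_nonneg_nonneg divide_nonneg_pos mult_nonneg_nonneg) auto
      ultimately show ?thesis by linarith
    qed
    show "integrable M (\<lambda>\<omega>. 2 * norm (u t \<omega>) * (G + \<sigma>) / (beta * sqrt (1 - beta)) + mu / 2 * (norm (u t \<omega>))\<^sup>2)"
    proof (rule Bochner_Integration.integrable_bound[where f="\<lambda>_. 2 * Dst * (G + \<sigma>) / (beta * sqrt (1 - beta)) + mu / 2 * Dst\<^sup>2"])
      show "integrable M (\<lambda>_. 2 * Dst * (G + \<sigma>) / (beta * sqrt (1 - beta)) + mu / 2 * Dst\<^sup>2)" by simp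
      show "(\<lambda>\<omega>. 2 * norm (u t \<omega>) * (G + \<sigma>) / (beta * sqrt (1 - beta)) + mu / 2 * (norm (u t \<omega>))\<^sup>2) \<in> borel_measurable M"
        by measurable
      show "AE \<omega> in M. norm (2 * norm (u t \<omega>) * (G + \<sigma>) / (beta * sqrt (1 - beta)) + mu / 2 * (norm (u t \<omega>))\<^sup>2)
          \<le> norm (2 * Dst * (G + \<sigma>) / (beta * sqrt (1 - beta)) + mu / 2 * Dst\<^sup>2)"
      proof (rule AE_I2)
        fix \<omega>
        have c0: "0 \<le> 2 * Dst * (G + \<sigma>) / (beta * sqrt (1 - beta)) + mu / 2 * Dst\<^sup>2"
          using b[of \<omega>] by linarith
        then have "norm (2 * Dst * (G + \<sigma>) / (beta * sqrt (1 - beta)) + mu / 2 * Dst\<^sup>2) = 2 * Dst * (G + \<sigma>) / (beta * sqrt (1 - beta)) + mu / 2 * Dst\<^sup>2"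
          by simp
        then show "norm (2 * norm (u t \<omega>) * (G + \<sigma>) / (beta * sqrt (1 - beta)) + mu / 2 * (norm (u t \<omega>))\<^sup>2)
          \<le> norm (2 * Dst * (G + \<sigma>) / (beta * sqrt (1 - beta)) + mu / 2 * Dst\<^sup>2)"
          using b[of \<omega>] by (simp only: real_norm_def)
      qed
    qed
    show "integrable M (\<lambda>_. Rb)" by simp
    fix \<omega>
    have "2 * Dst * (G + \<sigma>) / (beta * sqrt (1 - beta)) + mu / 2 * Dst\<^sup>2 = Rb"
      unfolding Rb_def a_def sqrt_1_beta ..
    then show "2 * norm (u t \<omega>) * (G + \<sigma>) / (beta * sqrt (1 - beta)) + mu / 2 * (norm (u t \<omega>))\<^sup>2 \<le> Rb"
      using b[of \<omega>] by linarith
  qed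
  also have "\<dots> = Rb" by (simp add: prob_space)
  finally show ?thesis .
qed

end

lemma key_yv:
  fixes y :: real assumes "y \<ge> 0"
  shows "(1 + 1 / (1 + 2 * y)) * (3 * y\<^sup>2) + (1 + (1 + 2 * y)) \<le> 4 * (1 + y)\<^sup>2"
proof -
  have p: "1 + 2 * y > 0" using assms by simp
  have "(1 + 1 / (1 + 2 * y)) * (3 * y\<^sup>2) = (2 + 2 * y) * (3 * y\<^sup>2) / (1 + 2 * y)"
    using p by (simp add: field_simps)
  also have "\<dots> \<le> (2 + 2 * y) * (1 + 2 * y)"
  proof -
    have "3 * y\<^sup>2 \<le> (1 + 2 * y) * (1 + 2 * y)" using assms by (simp add: power2_eq_square algebra_simps)
    then have "(2 + 2 * y) * (3 * y\<^sup>2) \<le> (2 + 2 * y) * ((1 + 2 * y) * (1 + 2 * y))"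
      using assms by (intro mult_left_mono) auto
    then show ?thesis using p by (simp add: divide_le_eq mult.assoc)
  qed
  finally show ?thesis by (simp add: power2_eq_square algebra_simps)
qed

lemma final_arith:
  fixes a kap lam eps sig yv CC K T' SD Sx E P4i Ia Ib mu Dst th eta b Rb :: real
  assumes a: "a > 0" and kap: "kap > 0" "kap \<le> 1/2" and b: "b = 1 - kap\<^sup>2"
    and eps: "eps = 7 * a * kap" and sig: "0 \<le> sig" "sig \<le> a" and lam: "lam > 0"
    and CC: "CC \<ge> 0" and yv: "yv = sqrt CC / kap\<^sup>2"
    and Dst: "Dst = 1 / 4 * (1 / sqrt lam) * sqrt eps / (1 + yv)"
    and mu: "mu = 2 * sqrt lam * sqrt eps * (1 + yv)"
    and th: "th = 1 / (a * kap)" and eta: "eta = 1 + 2 * yv"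
    and T': "kap\<^sup>2 * T' \<ge> 1" and K: "0 \<le> K" "K \<le> kap\<^sup>2 * T' + 1"
    and SD: "SD \<ge> 0" and Sx: "Sx \<le> CC * SD"
    and P4i: "P4i \<le> sig\<^sup>2 * K / T'"
    and Rb: "Rb = 2 * Dst * a / (b * kap) + mu / 2 * Dst\<^sup>2"
    and Ia: "Ia \<le> K * Rb" and Ib: "Ib = - E"
  shows "1 / (T' * Dst) * (Ia - Ib - mu / 2 * SD + mu / 2 * Dst\<^sup>2 * T') + th / 2 * P4i + 1 / (2 * th)
      + lam / T' * ((1 + 1 / eta) * (3 / (1 - b)\<^sup>2) * Sx + (1 + eta) * SD)
      \<le> 3 * eps + 1 / (Dst * T') * E"
proof -
  have eps0: "eps > 0" using eps a kap by simp
  have yv0: "yv \<ge> 0" using yv CC kap by simp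
  have T0: "T' > 0"
  proof -
    have "kap\<^sup>2 \<le> 1" using kap by (simp add: power_le_one)
    then show ?thesis using T' kap by (smt (verit, best) mult_nonneg_nonpos zero_le_power2)
  qed
  have Dst0: "Dst > 0" using Dst lam eps0 yv0 by simp
  have sl: "sqrt lam > 0" using lam by simp
  have se: "sqrt eps * sqrt eps = eps" using eps0 by simp
  have sl2: "sqrt lam * sqrt lam = lam" using lam by simp
  obtain r q where r: "r = sqrt lam" and q: "q = sqrt eps" by blast
  have r0: "r > 0" using r lam by simp
  have q0: "q > 0" using q eps0 by simp
  have lr: "lam = r * r" using r lam by simp
  have eq': "eps = q * q" using q eps0 by simp
  have y1: "1 + yv \<noteq> 0" using yv0 by simp
  have dnz: "r * 4 + r * (yv * 4) \<noteq> 0"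
  proof -
    have "r * 4 + r * (yv * 4) = 4 * (r * (1 + yv))" by (simp add: algebra_simps)
    also have "\<dots> > 0" using r0 yv0 by simp
    finally show ?thesis by simp
  qed
  have "mu * Dst = (2 * r * q * (1 + yv)) * (1 / 4 * (1 / r) * q / (1 + yv))"
    unfolding mu Dst r[symmetric] q[symmetric] ..
  also have "\<dots> = q * q / 2" using r0 y1 dnz by (simp add: field_simps)
  finally have "mu * Dst = q * q / 2" .
  then have mD: "mu * Dst = eps / 2" using eq' by simp
  have mD2: "mu / Dst = 8 * lam * (1 + yv)\<^sup>2"
  proof -
    have "mu / Dst = (2 * r * q * (1 + yv)) / (1 / 4 * (1 / r) * q / (1 + yv))"
      unfolding mu Dst r[symmetric] q[symmetric] ..
    also have "\<dots> = 8 * (r * r) * (1 + yv)\<^sup>2" using r0 q0 y1 by (simp add: field_simps power2_eq_square)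
    finally show ?thesis using lr by simp
  qed
  have b1: "1 - b = kap\<^sup>2" using b by simp
  have bge: "b \<ge> 3/4"
  proof -
    have "kap\<^sup>2 \<le> (1/2)\<^sup>2" using kap by (intro power_mono) auto
    then show ?thesis using b by (simp add: power2_eq_square)
  qed
  have yv2: "3 / (1 - b)\<^sup>2 * CC = 3 * yv\<^sup>2"
    unfolding b1 yv using CC kap by (simp add: power_divide power2_eq_square)
  have sdt: "- (mu / 2 * SD) / (T' * Dst) + lam / T' * ((1 + 1 / eta) * (3 / (1 - b)\<^sup>2) * Sx + (1 + eta) * SD) \<le> 0"
  proof -
    have "(1 + 1 / eta) * (3 / (1 - b)\<^sup>2) * Sx \<le> (1 + 1 / eta) * (3 / (1 - b)\<^sup>2) * (CC * SD)"
      using Sx eta yv0 by (intro mult_left_mono) auto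
    also have "\<dots> = (1 + 1 / eta) * ((3 / (1 - b)\<^sup>2) * CC) * SD" by (simp only: mult.assoc)
    also have "\<dots> = (1 + 1 / eta) * (3 * yv\<^sup>2) * SD" by (simp only: yv2)
    finally have "lam / T' * ((1 + 1 / eta) * (3 / (1 - b)\<^sup>2) * Sx + (1 + eta) * SD)
        \<le> lam / T' * ((1 + 1 / eta) * (3 * yv\<^sup>2) * SD + (1 + eta) * SD)"
      using lam T0 by (intro mult_left_mono add_right_mono) auto
    also have "\<dots> = lam / T' * SD * ((1 + 1 / eta) * (3 * yv\<^sup>2) + (1 + eta))" by (simp add: algebra_simps)
    also have "\<dots> \<le> lam / T' * SD * (4 * (1 + yv)\<^sup>2)"
      using key_yv[OF yv0] eta lam T0 SD by (intro mult_left_mono) auto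
    also have "\<dots> = (mu / 2 * SD) / (T' * Dst)"
    proof -
      have "(mu / 2 * SD) / (T' * Dst) = (mu / Dst) * SD / (2 * T')" using Dst0 T0 by (simp add: field_simps)
      also have "\<dots> = lam / T' * SD * (4 * (1 + yv)\<^sup>2)" unfolding mD2 using T0 by (simp add: field_simps)
      finally show ?thesis by simp
    qed
    finally show ?thesis by simp
  qed
  have KT: "K / T' \<le> 2 * kap\<^sup>2"
    using K T' T0 by (simp add: divide_le_eq)
  have c1: "1 / (T' * Dst) * (K * Rb) \<le> 16 / 21 * eps + eps / 8"
  proof -
    have "1 / (T' * Dst) * (K * Rb) = (K / T') * (2 * a / (b * kap) + mu * Dst / 2)"
      unfolding Rb using Dst0 T0 by (simp add: field_simps power2_eq_square)
    also have "\<dots> \<le> (2 * kap\<^sup>2) * (2 * a / (b * kap) + mu * Dst / 2)"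
      using KT a kap bge mD eps0 by (intro mult_right_mono) auto
    also have "\<dots> = 4 * kap * a / b + kap\<^sup>2 * eps / 2"
      unfolding mD using kap bge by (simp add: field_simps power2_eq_square)
    also have "4 * kap * a / b \<le> 16 / 21 * eps"
    proof -
      have "4 * kap * a / b \<le> 4 * kap * a / (3/4)"
        using bge a kap by (intro divide_left_mono) auto
      then show ?thesis unfolding eps by (simp add: mult.commute)
    qed
    also have "kap\<^sup>2 * eps / 2 \<le> eps / 8"
    proof -
      have "kap\<^sup>2 \<le> (1/2)\<^sup>2" using kap by (intro power_mono) auto
      then show ?thesis using eps0 by (simp add: power2_eq_square)
    qed
    finally show ?thesis by simp
  qed
  have c2: "th / 2 * P4i + 1 / (2 * th) \<le> 3 / 14 * eps"
  proof -
    have th0: "th > 0" using th a kap by simp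
    have "th / 2 * P4i \<le> th / 2 * (sig\<^sup>2 * K / T')" using P4i th0 by (intro mult_left_mono) auto
    also have "sig\<^sup>2 * K / T' \<le> sig\<^sup>2 * (2 * kap\<^sup>2)"
      using KT by (simp add: mult_left_mono times_divide_eq_right[symmetric] del: times_divide_eq_right)
    also have "sig\<^sup>2 \<le> a\<^sup>2" using sig by (intro power_mono) auto
    finally have "th / 2 * P4i \<le> th / 2 * (a\<^sup>2 * (2 * kap\<^sup>2))"
      using th0 kap by (simp add: mult_left_mono mult_right_mono)
    also have "\<dots> = a * kap" unfolding th using a kap by (simp add: field_simps power2_eq_square)
    finally have "th / 2 * P4i \<le> a * kap" .
    moreover have "1 / (2 * th) = a * kap / 2" unfolding th using a kap by simp
    ultimately show ?thesis unfolding eps by simp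
  qed
  have main: "1 / (T' * Dst) * (Ia - Ib - mu / 2 * SD + mu / 2 * Dst\<^sup>2 * T')
     \<le> 1 / (T' * Dst) * (K * Rb) + 1 / (Dst * T') * E - (mu / 2 * SD) / (T' * Dst) + eps / 4"
  proof -
    have "1 / (T' * Dst) * (Ia - Ib - mu / 2 * SD + mu / 2 * Dst\<^sup>2 * T')
        = 1 / (T' * Dst) * Ia + 1 / (Dst * T') * E - (mu / 2 * SD) / (T' * Dst) + mu * Dst / 2"
      unfolding Ib using Dst0 T0 by (simp add: field_simps power2_eq_square)
    also have "1 / (T' * Dst) * Ia \<le> 1 / (T' * Dst) * (K * Rb)"
      using Ia Dst0 T0 by (intro mult_left_mono) auto
    finally show ?thesis unfolding mD by simp
  qed
  show ?thesis using main sdt c1 c2 eps0 by linarith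
qed

context setting
begin

definition "KK = (\<Sum>t=1..T. ct t)"
definition "EE = (\<integral>\<omega>. (\<Sum>t=1..T. F (x t \<omega>) - F (x t \<omega> + D t \<omega>)) \<partial>M)"

lemma KK_bounds: "0 \<le> KK \<and> KK \<le> kap\<^sup>2 * real T + 1"
proof -
  have "KK = (\<Sum>t=1..T. (1 - beta) + (if t = T then beta else 0))"
    unfolding KK_def ctf_def by (rule sum.cong) auto
  also have "\<dots> = real T * (1 - beta) + beta"
    using T_pos by (simp add: sum.distrib)
  finally have "KK = real T * (1 - beta) + beta" .
  then show ?thesis using beta_kap beta_pos beta_lt by (auto simp: mult.commute)
qed

lemma P1_int: "integrable M P1"
  unfolding P1_def[abs_def] by (intro Bochner_Integration.integrable_sum integrable_mult_right R_int) auto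

lemma P2_int: "integrable M P2"
  unfolding P2_def[abs_def] by (intro Bochner_Integration.integrable_sum SQ_inner_int SQ_g SQ_D) auto

lemma P3_int: "integrable M P3"
  unfolding P3_def[abs_def] by (intro Bochner_Integration.integrable_sum D_sq) auto

lemma P4_int: "integrable M P4"
  unfolding P4_def[abs_def] by (intro Bochner_Integration.integrable_sum integrable_mult_right SQ_int[OF SQ_Z]) auto

lemma P5_int: "integrable M P5"
  unfolding P5_def[abs_def] by (intro Bochner_Integration.integrable_sum x_sq) auto

lemma int_P1: "(\<integral>\<omega>. P1 \<omega> \<partial>M) \<le> KK * Rb"
proof -
  have "(\<integral>\<omega>. P1 \<omega> \<partial>M) = (\<Sum>t=1..T. ct t * (\<integral>\<omega>. disc_regret beta mu (\<lambda>i. g i \<omega>) (\<lambda>i. D i \<omega>) t (u t \<omega>) \<partial>M))"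
    unfolding P1_def by (subst Bochner_Integration.integral_sum) (auto intro: R_int)
  also have "\<dots> \<le> (\<Sum>t=1..T. ct t * Rb)"
    by (rule sum_mono, rule mult_left_mono[OF E_R]) (use beta_lt in \<open>auto simp: ctf_nonneg\<close>)
  also have "\<dots> = KK * Rb" unfolding KK_def by (simp add: sum_distrib_right)
  finally show ?thesis .
qed

lemma int_P2: "(\<integral>\<omega>. P2 \<omega> \<partial>M) = - EE"
proof -
  have "(\<integral>\<omega>. P2 \<omega> \<partial>M) = (\<Sum>i=1..T. (\<integral>\<omega>. g i \<omega> \<bullet> D i \<omega> \<partial>M))"
    unfolding P2_def by (subst Bochner_Integration.integral_sum) (use SQ_inner_int[OF SQ_g SQ_D] in auto)
  also have "\<dots> = (\<Sum>i=1..T. - (\<integral>\<omega>. F (x i \<omega>) - F (x i \<omega> + D i \<omega>) \<partial>M))"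
  proof (rule sum.cong[OF refl])
    fix i assume i: "i \<in> {1..T}"
    have "(\<integral>\<omega>. F (x i \<omega>) - F (x i \<omega> + D i \<omega>) \<partial>M) = - (\<integral>\<omega>. F (x i \<omega> + D i \<omega>) - F (x i \<omega>) \<partial>M)"
      by (subst Bochner_Integration.integral_minus[symmetric]) simp
    then show "(\<integral>\<omega>. g i \<omega> \<bullet> D i \<omega> \<partial>M) = - (\<integral>\<omega>. F (x i \<omega>) - F (x i \<omega> + D i \<omega>) \<partial>M)"
      using E_gD[OF i] by simp
  qed
  also have "\<dots> = - EE"
    unfolding EE_def by (subst Bochner_Integration.integral_sum) (auto intro: F_int simp: sum_negf)
  finally show ?thesis .
qed

lemma int_P4: "(\<integral>\<omega>. P4 \<omega> \<partial>M) \<le> \<sigma>\<^sup>2 * KK / real T"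
proof -
  have "(\<integral>\<omega>. P4 \<omega> \<partial>M) = (\<Sum>t=1..T. tau t * (\<integral>\<omega>. (norm (Z t \<omega>))\<^sup>2 \<partial>M))"
    unfolding P4_def by (subst Bochner_Integration.integral_sum) (auto intro: SQ_int[OF SQ_Z])
  also have "\<dots> \<le> (\<Sum>t=1..T. tau t * (\<sigma>\<^sup>2 * ((1 - beta) / (1 - beta ^ t))))"
    by (rule sum_mono, rule mult_left_mono[OF E_Z]) (auto simp: tau_nonneg)
  also have "\<dots> = (\<Sum>t=1..T. \<sigma>\<^sup>2 * (ct t * (1 / real T)))"
  proof (rule sum.cong[OF refl])
    fix t assume t: "t \<in> {1..T}"
    show "tau t * (\<sigma>\<^sup>2 * ((1 - beta) / (1 - beta ^ t))) = \<sigma>\<^sup>2 * (ct t * (1 / real T))"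
    proof -
      have "tau t * (\<sigma>\<^sup>2 * ((1 - beta) / (1 - beta ^ t))) = \<sigma>\<^sup>2 * (tau t * ((1 - beta) / (1 - beta ^ t)))"
        by (rule mult.left_commute)
      also have "\<dots> = \<sigma>\<^sup>2 * (ct t * (1 / real T))" by (simp only: tau_a[OF t])
      finally show ?thesis .
    qed
  qed
  also have "\<dots> = \<sigma>\<^sup>2 * KK / real T" unfolding KK_def by (simp add: sum_distrib_left sum_divide_distrib)
  finally show ?thesis .
qed

lemma Hf_int: "integrable M Hf"
  unfolding Hf_def[abs_def]
  by (intro Bochner_Integration.integrable_add Bochner_Integration.integrable_diff integrable_mult_right
      integrable_const P1_int P2_int P3_int P4_int P5_int)

lemma int_Hf: "(\<integral>\<omega>. Hf \<omega> \<partial>M) = 1 / (real T * Dst) * ((\<integral>\<omega>. P1 \<omega> \<partial>M) - (\<integral>\<omega>. P2 \<omega> \<partial>M) - mu / 2 * (\<integral>\<omega>. P3 \<omega> \<partial>M) + mu / 2 * Dst\<^sup>2 * real T)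
   + th / 2 * (\<integral>\<omega>. P4 \<omega> \<partial>M) + 1 / (2 * th) + lam / real T * ((1 + 1 / eta) * (3 / (1 - beta)\<^sup>2) * (\<integral>\<omega>. P5 \<omega> \<partial>M) + (1 + eta) * (\<integral>\<omega>. P3 \<omega> \<partial>M))"
  unfolding Hf_def using P1_int P2_int P3_int P4_int P5_int
  by (simp add: Bochner_Integration.integral_add Bochner_Integration.integral_diff prob_space)

lemma main_bound:
  "(\<Sum>t=1..T. tau_prob beta T t *
           enn2real (\<integral>\<^sup>+\<omega>. ennreal (lam_norm gF lam
               (ema beta (\<lambda>i. x i \<omega> + s i \<omega> *\<^sub>R D i \<omega>) t)) \<partial>M))
         \<le> 3 * eps + 1 / ((1 / 4 * (1 / sqrt lam) * sqrt eps
                 / (1 + 49 * (G + \<sigma>)\<^sup>2 / eps\<^sup>2 * sqrt (Cx M x D T))) * real T)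
             * (\<integral>\<omega>. (\<Sum>t=1..T. F (x t \<omega>) - F (x t \<omega> + D t \<omega>)) \<partial>M)"
proof -
  have "(\<Sum>t=1..T. tau t * enn2real (\<integral>\<^sup>+\<omega>. ennreal (lam_norm gF lam
               (ema beta (\<lambda>i. x i \<omega> + s i \<omega> *\<^sub>R D i \<omega>) t)) \<partial>M))
       \<le> (\<Sum>t=1..T. tau t * (\<integral>\<omega>. h t \<omega> \<partial>M))"
    by (rule sum_mono, rule mult_left_mono[OF lhs_t]) (auto simp: tau_nonneg)
  also have "\<dots> = (\<integral>\<omega>. (\<Sum>t=1..T. tau t * h t \<omega>) \<partial>M)"
    by (subst Bochner_Integration.integral_sum) (auto intro: h_int)
  also have "\<dots> \<le> (\<integral>\<omega>. Hf \<omega> \<partial>M)"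
    by (rule integral_mono[OF _ Hf_int point_bound]) (auto intro!: Bochner_Integration.integrable_sum integrable_mult_right h_int)
  also have "\<dots> \<le> 3 * eps + 1 / (Dst * real T) * EE"
    unfolding int_Hf
  apply (rule final_arith[where a=a and kap=kap and sig=\<sigma> and CC=CC and K=KK and SD="\<integral>\<omega>. P3 \<omega> \<partial>M" and Sx="\<integral>\<omega>. P5 \<omega> \<partial>M" and b=beta and Rb=Rb
      and lam=lam and eps=eps and yv=yv and T'="real T" and E=EE and P4i="\<integral>\<omega>. P4 \<omega> \<partial>M" and Ia="\<integral>\<omega>. P1 \<omega> \<partial>M"
      and Ib="\<integral>\<omega>. P2 \<omega> \<partial>M" and mu=mu and Dst=Dst and th=th and eta=eta])
  proof -
    show "0 < a" by (rule a_pos)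
    show "0 < kap" by (rule kap_pos)
    show "kap \<le> 1/2" by (rule kap_le)
    show "beta = 1 - kap\<^sup>2" by (rule beta_kap)
    show "eps = 7 * a * kap" by (rule eps_kap)
    show "0 \<le> \<sigma>" by (rule sigma_nonneg)
    show "\<sigma> \<le> a" by (rule sig_le_a)
    show "0 < lam" by (rule lam_pos)
    show "0 \<le> CC" using CC_props by simp
    show "yv = sqrt CC / kap\<^sup>2"
      unfolding yv_def kap_def a_def using eps_pos a_pos unfolding a_def
      by (simp add: power_divide field_simps power2_eq_square)
    show "Dst = 1 / 4 * (1 / sqrt lam) * sqrt eps / (1 + yv)" by (rule Dst_def)
    show "mu = 2 * sqrt lam * sqrt eps * (1 + yv)" by (rule mu_eq)
    show "th = 1 / (a * kap)" by (rule th_def)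
    show "eta = 1 + 2 * yv" by (rule eta_def)
    show "1 \<le> kap\<^sup>2 * real T" by (rule T_kap)
    show "0 \<le> KK" "KK \<le> kap\<^sup>2 * real T + 1" using KK_bounds by auto
    have e3: "(\<integral>\<omega>. P3 \<omega> \<partial>M) = SD" unfolding P3_def[abs_def] SD_def ..
    have e5: "(\<integral>\<omega>. P5 \<omega> \<partial>M) = Sx" unfolding P5_def[abs_def] Sx_def ..
    show "0 \<le> (\<integral>\<omega>. P3 \<omega> \<partial>M)" unfolding e3 by (rule SD_nonneg)
    show "(\<integral>\<omega>. P5 \<omega> \<partial>M) \<le> CC * (\<integral>\<omega>. P3 \<omega> \<partial>M)" unfolding e3 e5 using CC_props by simp
    show "(\<integral>\<omega>. P4 \<omega> \<partial>M) \<le> \<sigma>\<^sup>2 * KK / real T" by (rule int_P4)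
    show "Rb = 2 * Dst * a / (beta * kap) + mu / 2 * Dst\<^sup>2" by (rule Rb_def)
    show "(\<integral>\<omega>. P1 \<omega> \<partial>M) \<le> KK * Rb" by (rule int_P1)
    show "(\<integral>\<omega>. P2 \<omega> \<partial>M) = - EE" by (rule int_P2)
  qed
  finally show ?thesis unfolding EE_def Dst_def yv_def CC_def .
qed

end

theorem theorem2:
  fixes M :: "'w measure"
    and F :: "'a::euclidean_space \<Rightarrow> real" and gF :: "'a \<Rightarrow> 'a"
    and G \<sigma> lam eps beta mu :: real and T :: nat
    and x0 :: 'a
    and D x g :: "nat \<Rightarrow> 'w \<Rightarrow> 'a" and s :: "nat \<Rightarrow> 'w \<Rightarrow> real"
    and Gs Hs Fh :: "nat \<Rightarrow> 'w measure"
  assumes M: "prob_space M"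
    \<comment> \<open>standing assumptions on F\<close>
    and F_deriv: "\<And>z. (F has_derivative (\<lambda>h. gF z \<bullet> h)) (at z)"
    and F_ftc: "\<And>z w. ((\<lambda>r. gF (w + r *\<^sub>R (z - w)) \<bullet> (z - w)) has_integral (F z - F w)) {0..1}"
    and G_bound: "\<And>z. norm (gF z) \<le> G"
    and sigma_nonneg: "\<sigma> \<ge> 0"
    \<comment> \<open>information structure: Gs t = history before s_t (contains Delta_t, x_t),
        Hs t = history including s_t (the oracle is queried given it),
        Fh t = history after round t\<close>
    and Fh0: "subalgebra M (Fh 0)"
    and sub_Gs: "\<And>t. t \<in> {1..T} \<Longrightarrow> subalgebra M (Gs t)"
    and sub_Hs: "\<And>t. t \<in> {1..T} \<Longrightarrow> subalgebra M (Hs t)"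
    and sub_Fh: "\<And>t. t \<in> {1..T} \<Longrightarrow> subalgebra M (Fh t)"
    and filt1: "\<And>t. t \<in> {1..T} \<Longrightarrow> sets (Fh (t - 1)) \<subseteq> sets (Gs t)"
    and filt2: "\<And>t. t \<in> {1..T} \<Longrightarrow> sets (Gs t) \<subseteq> sets (Hs t)"
    and filt3: "\<And>t. t \<in> {1..T} \<Longrightarrow> sets (Hs t) \<subseteq> sets (Fh t)"
    \<comment> \<open>x_0 = w_0 is the deterministic input\<close>
    and x_0: "\<And>\<omega>. x 0 \<omega> = x0"
    \<comment> \<open>Delta_t (learner output) and x_t chosen before s_t, g_t\<close>
    and D_meas: "\<And>t. t \<in> {1..T} \<Longrightarrow> D t \<in> borel_measurable (Gs t)"
    and x_meas: "\<And>t. t \<in> {1..T} \<Longrightarrow> x t \<in> borel_measurable (Gs t)"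
    and D_sq: "\<And>t. t \<in> {1..T} \<Longrightarrow> integrable M (\<lambda>\<omega>. (norm (D t \<omega>))\<^sup>2)"
    and x_sq: "\<And>t. t \<in> {1..T} \<Longrightarrow> integrable M (\<lambda>\<omega>. (norm (x t \<omega> - x (t - 1) \<omega>))\<^sup>2)"
    \<comment> \<open>s_t ~ Unif[0,1], independent of everything before it\<close>
    and s_meas: "\<And>t. t \<in> {1..T} \<Longrightarrow> s t \<in> borel_measurable (Hs t)"
    and s_unif: "\<And>t. t \<in> {1..T} \<Longrightarrow> distr M lborel (s t) = uniform_measure lborel {0..1}"
    and s_indep: "\<And>t A B. t \<in> {1..T} \<Longrightarrow> A \<in> sets (Gs t) \<Longrightarrow> B \<in> sets borel \<Longrightarrow>
        measure M (A \<inter> (s t -` B \<inter> space M)) = measure M A * measure M (s t -` B \<inter> space M)"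
    \<comment> \<open>g_t: stochastic gradient oracle output at y_t = x_t + s_t Delta_t\<close>
    and g_meas: "\<And>t. t \<in> {1..T} \<Longrightarrow> g t \<in> borel_measurable (Fh t)"
    and g_sq: "\<And>t. t \<in> {1..T} \<Longrightarrow>
        integrable M (\<lambda>\<omega>. (norm (g t \<omega> - gF (x t \<omega> + s t \<omega> *\<^sub>R D t \<omega>)))\<^sup>2)"
    and g_unbiased: "\<And>t b. t \<in> {1..T} \<Longrightarrow> b \<in> Basis \<Longrightarrow>
        AE \<omega> in M. real_cond_exp M (Hs t) (\<lambda>\<omega>. g t \<omega> \<bullet> b) \<omega>
                    = gF (x t \<omega> + s t \<omega> *\<^sub>R D t \<omega>) \<bullet> b"
    and g_var: "\<And>t. t \<in> {1..T} \<Longrightarrow>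
        AE \<omega> in M. real_cond_exp M (Hs t)
           (\<lambda>\<omega>. (norm (g t \<omega> - gF (x t \<omega> + s t \<omega> *\<^sub>R D t \<omega>)))\<^sup>2) \<omega> \<le> \<sigma>\<^sup>2"
    \<comment> \<open>regret guarantee of the online learner, for every (bounded, measurable) comparator\<close>
    and regret: "\<And>t u. t \<in> {1..T} \<Longrightarrow> u \<in> borel_measurable M \<Longrightarrow>
        (\<exists>B. \<forall>\<omega>\<in>space M. norm (u \<omega>) \<le> B) \<Longrightarrow>
        (\<integral>\<omega>. disc_regret beta mu (\<lambda>i. g i \<omega>) (\<lambda>i. D i \<omega>) t (u \<omega>) \<partial>M)
          \<le> (\<integral>\<omega>. 2 * norm (u \<omega>) * (G + \<sigma>) / (beta * sqrt (1 - beta))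
                    + mu / 2 * (norm (u \<omega>))\<^sup>2 \<partial>M)"
    \<comment> \<open>C_x is well defined (finite)\<close>
    and Cx_exists: "\<exists>C\<ge>0. (\<integral>\<omega>. (\<Sum>t=1..T. (norm (x t \<omega> - x (t - 1) \<omega>))\<^sup>2) \<partial>M)
        \<le> C * (\<integral>\<omega>. (\<Sum>t=1..T. (norm (D t \<omega>))\<^sup>2) \<partial>M)"
    \<comment> \<open>parameters\<close>
    and lam_pos: "lam > 0"
    and eps_pos: "eps > 0"
    and eps_le: "eps \<le> 7 / 2 * (G + \<sigma>)"
    and T_ge: "real T \<ge> 49 * (G + \<sigma>)\<^sup>2 / eps\<^sup>2"
    and beta_def: "beta = 1 - (eps / (7 * (G + \<sigma>)))\<^sup>2"
    and mu_def: "mu = 2 * sqrt lam * sqrt eps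
        * (1 + 49 * (G + \<sigma>)\<^sup>2 / eps\<^sup>2 * sqrt (Cx M x D T))"
  shows "(\<Sum>t=1..T. tau_prob beta T t *
           enn2real (\<integral>\<^sup>+\<omega>. ennreal (lam_norm gF lam
               (ema beta (\<lambda>i. x i \<omega> + s i \<omega> *\<^sub>R D i \<omega>) t)) \<partial>M))
         \<le> 3 * eps + 1 / ((1 / 4 * (1 / sqrt lam) * sqrt eps
                 / (1 + 49 * (G + \<sigma>)\<^sup>2 / eps\<^sup>2 * sqrt (Cx M x D T))) * real T)
             * (\<integral>\<omega>. (\<Sum>t=1..T. F (x t \<omega>) - F (x t \<omega> + D t \<omega>)) \<partial>M)"
proof -
  interpret S: setting M F gF G \<sigma> lam eps beta mu T x0 D x g s Gs Hs Fh
    by (intro setting.intro setting_axioms.intro assms)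
  show ?thesis by (rule S.main_bound)
qed

end
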